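(* Let $n\ge1$, $d=2^n$, and let $\mathbb{E}_U$ denote the average over Haar-random $U\in\mathcal{U}(d)$. Then $\mathbb{E}_U[\mathcal{M}_{lin}(U)]=1-\frac{4}{d+3}$, and consequently $\mathbb{E}_U[\mathcal{M}_2(U)]\ge-\log\big(1-\mathbb{E}_U[\mathcal{M}_{lin}(U)]\big)=\log\frac{d+3}{4}$.
   Context: Logarithms are base 2. $\mathcal{P}_n$ is the set of the $4^n$ $n$-qubit Pauli strings $\sigma_1\otimes\cdots\otimes\sigma_n$, $\sigma_i\in\{I,X,Y,Z\}$. For a pure state, $M_{lin}(|\psi\rangle)=1-d^{-1}\sum_{P\in\mathcal{P}_n}\langle\psi|P|\psi\rangle^4$ and $M_2(|\psi\rangle)=-\log(1-M_{lin}(|\psi\rangle))=-\log\big(d^{-1}\sum_P\langle\psi|P|\psi\rangle^4\big)$. $\mathrm{STAB}$ is the finite set of $n$-qubit pure stabilizer states (states $C|0\rangle^{\otimes n}$ with $C$ a Clifford unitary, i.e. $CPC^\dagger\in\{\pm1,\pm i\}\mathcal{P}_n$ for all $P$). The non-stabilizing powers are $\mathcal{M}_{lin}(U)=\frac{1}{|\mathrm{STAB}|}\sum_{|\psi\rangle\in\mathrm{STAB}}M_{lin}(U|\psi\rangle)$ and $\mathcal{M}_2(U)=\frac{1}{|\mathrm{STAB}|}\sum_{|\psi\rangle\in\mathrm{STAB}}M_2(U|\psi\rangle)$. *)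

theory Defs
  imports "HOL-Probability.Probability"
begin

text \<open>The n qubits are indexed by a finite type 'n (so n = CARD('n) \<ge> 1),
  computational basis states are bit strings 'n \<Rightarrow> bool (d = 2^n of them), and
  operators on the d-dimensional Hilbert space are matrices complex^('n\<Rightarrow>bool)^('n\<Rightarrow>bool),
  with M $ x $ y the entry in row x, column y.\<close>

type_synonym 'n qmat = "complex ^ ('n \<Rightarrow> bool) ^ ('n \<Rightarrow> bool)"
type_synonym 'n qvec = "complex ^ ('n \<Rightarrow> bool)"

definition qdim :: "'n::finite itself \<Rightarrow> nat" where
  "qdim _ = 2 ^ CARD('n)"

definition adj :: "'n::finite qmat \<Rightarrow> 'n qmat" where
  "adj A = (\<chi> i j. cnj (A $ j $ i))"

definition tr :: "'n::finite qmat \<Rightarrow> complex" where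
  "tr A = (\<Sum>i\<in>UNIV. A $ i $ i)"

definition cscale :: "complex \<Rightarrow> 'n::finite qmat \<Rightarrow> 'n qmat" where
  "cscale c A = (\<chi> i j. c * A $ i $ j)"

definition unitary_group :: "'n::finite qmat set" where
  "unitary_group = {U. U ** adj U = mat 1 \<and> adj U ** U = mat 1}"

datatype pauli = PI | PX | PY | PZ

lemma UNIV_pauli: "(UNIV :: pauli set) = {PI, PX, PY, PZ}"
  using pauli.exhaust by auto

instance pauli :: finite
  by standard (simp add: UNIV_pauli)

text \<open>Single-qubit Pauli matrices, basis |0> = False, |1> = True.\<close>
fun pauli_entry :: "pauli \<Rightarrow> bool \<Rightarrow> bool \<Rightarrow> complex" where
  "pauli_entry PI a b = (if a = b then 1 else 0)"
| "pauli_entry PX a b = (if a \<noteq> b then 1 else 0)"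
| "pauli_entry PY a b = (if a = b then 0 else if a then \<i> else - \<i>)"
| "pauli_entry PZ a b = (if a = b then (if a then -1 else 1) else 0)"

definition pauli_string :: "('n::finite \<Rightarrow> pauli) \<Rightarrow> 'n qmat" where
  "pauli_string s = (\<chi> x y. \<Prod>k\<in>UNIV. pauli_entry (s k) (x k) (y k))"

definition pauli_group_set :: "'n::finite qmat set" where
  "pauli_group_set = range pauli_string"

definition clifford :: "'n::finite qmat set" where
  "clifford = {C \<in> unitary_group. \<forall>P \<in> pauli_group_set.
       \<exists>c \<in> {1, -1, \<i>, - \<i>}. \<exists>Q \<in> pauli_group_set. C ** P ** adj C = cscale c Q}"

definition ket0 :: "'n::finite qvec" where
  "ket0 = (\<chi> x. if x = (\<lambda>_. False) then 1 else 0)"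

definition proj :: "'n::finite qvec \<Rightarrow> 'n qmat" where
  "proj \<psi> = (\<chi> i j. \<psi> $ i * cnj (\<psi> $ j))"

text \<open>Pure stabilizer states, represented (up to global phase) by their projectors
  |psi><psi|, psi = C|0...0>, C Clifford. This is a finite set.\<close>
definition STAB :: "'n::finite qmat set" where
  "STAB = {proj (C *v ket0) | C. C \<in> clifford}"

text \<open>For a pure state rho = |psi><psi|, <psi|P|psi> = tr(P rho) (a real number).\<close>
definition pauli_exp :: "('n::finite \<Rightarrow> pauli) \<Rightarrow> 'n qmat \<Rightarrow> real" where
  "pauli_exp s \<rho> = Re (tr (pauli_string s ** \<rho>))"

definition Mlin :: "'n::finite qmat \<Rightarrow> real" where
  "Mlin \<rho> = 1 - (1 / real (qdim TYPE('n))) * (\<Sum>s\<in>UNIV. (pauli_exp s \<rho>) ^ 4)"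

definition M2 :: "'n::finite qmat \<Rightarrow> real" where
  "M2 \<rho> = - log 2 ((1 / real (qdim TYPE('n))) * (\<Sum>s\<in>UNIV. (pauli_exp s \<rho>) ^ 4))"

definition NSlin :: "'n::finite qmat \<Rightarrow> real" where
  "NSlin U = (\<Sum>\<rho>\<in>STAB. Mlin (U ** \<rho> ** adj U)) / real (card (STAB :: 'n qmat set))"

definition NS2 :: "'n::finite qmat \<Rightarrow> real" where
  "NS2 U = (\<Sum>\<rho>\<in>STAB. M2 (U ** \<rho> ** adj U)) / real (card (STAB :: 'n qmat set))"

text \<open>Normalized Haar measure on U(d): a Borel probability measure concentrated on the
  unitary group and invariant under left multiplication by unitaries (unique).\<close>
definition haar_unitary :: "'n::finite qmat measure \<Rightarrow> bool" where
  "haar_unitary \<mu> \<longleftrightarrow> prob_space \<mu> \<and> sets \<mu> = sets borel \<and>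
     emeasure \<mu> unitary_group = 1 \<and>
     (\<forall>V \<in> unitary_group. distr \<mu> borel (\<lambda>U. V ** U) = \<mu>)"

end

theory Submission
  imports Defs "HOL-Library.FuncSet"
begin

definition qf :: "'n::finite qmat \<Rightarrow> 'n qvec \<Rightarrow> complex" where
  "qf A w = (\<Sum>x\<in>UNIV. \<Sum>y\<in>UNIV. cnj (w$x) * A$x$y * w$y)"

definition nsq :: "'n::finite qvec \<Rightarrow> real" where
  "nsq w = (\<Sum>x\<in>UNIV. (cmod (w$x))^2)"

lemma sum4_swap: "(\<Sum>x\<in>A. \<Sum>y\<in>B. \<Sum>j\<in>C. \<Sum>k\<in>D. f x y j k) =
   (\<Sum>j\<in>C. \<Sum>k\<in>D. \<Sum>x\<in>A. \<Sum>y\<in>B. f x y j k)"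
proof -
  have "(\<Sum>x\<in>A. \<Sum>y\<in>B. \<Sum>j\<in>C. \<Sum>k\<in>D. f x y j k) = (\<Sum>x\<in>A. \<Sum>j\<in>C. \<Sum>y\<in>B. \<Sum>k\<in>D. f x y j k)"
    by (rule sum.cong[OF refl], rule sum.swap)
  also have "\<dots> = (\<Sum>j\<in>C. \<Sum>x\<in>A. \<Sum>y\<in>B. \<Sum>k\<in>D. f x y j k)"
    by (rule sum.swap)
  also have "\<dots> = (\<Sum>j\<in>C. \<Sum>x\<in>A. \<Sum>k\<in>D. \<Sum>y\<in>B. f x y j k)"
    by (rule sum.cong[OF refl], rule sum.cong[OF refl], rule sum.swap)
  also have "\<dots> = (\<Sum>j\<in>C. \<Sum>k\<in>D. \<Sum>x\<in>A. \<Sum>y\<in>B. f x y j k)"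
    by (rule sum.cong[OF refl], rule sum.swap)
  finally show ?thesis .
qed

lemma qf_mult: "qf A (W *v w) = qf (adj W ** A ** W) w"
proof -
  have "qf A (W *v w) = (\<Sum>x\<in>UNIV. \<Sum>y\<in>UNIV. \<Sum>j\<in>UNIV. \<Sum>k\<in>UNIV. cnj (W$x$j) * cnj (w$j) * A$x$y * W$y$k * w$k)"
    by (simp add: qf_def matrix_vector_mult_def sum_distrib_left sum_distrib_right mult_ac)
  also have "\<dots> = (\<Sum>j\<in>UNIV. \<Sum>k\<in>UNIV. \<Sum>x\<in>UNIV. \<Sum>y\<in>UNIV. cnj (W$x$j) * cnj (w$j) * A$x$y * W$y$k * w$k)"
    by (rule sum4_swap)
  also have "\<dots> = (\<Sum>j\<in>UNIV. \<Sum>k\<in>UNIV. \<Sum>y\<in>UNIV. \<Sum>x\<in>UNIV. cnj (W$x$j) * cnj (w$j) * A$x$y * W$y$k * w$k)"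
    by (rule sum.cong[OF refl], rule sum.cong[OF refl], rule sum.swap)
  also have "\<dots> = qf (adj W ** A ** W) w"
    by (simp add: qf_def adj_def matrix_matrix_mult_def sum_distrib_left sum_distrib_right mult_ac)
  finally show ?thesis .
qed

lemma tr_proj: "tr (A ** proj w) = qf A w"
  by (simp add: tr_def qf_def proj_def matrix_matrix_mult_def sum_distrib_left sum_distrib_right mult_ac)

lemma conj_proj: "U ** proj w ** adj U = proj (U *v w)"
  by (simp add: vec_eq_iff proj_def adj_def matrix_matrix_mult_def matrix_vector_mult_def
      sum_distrib_left sum_distrib_right mult_ac)

lemma qf_one: "qf (mat 1) w = of_real (nsq w)"
proof -
  have "qf (mat 1) w = (\<Sum>x\<in>UNIV. cnj (w$x) * w$x)"
    unfolding qf_def mat_def of_bool_def[symmetric]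
  proof (rule sum.cong[OF refl])
    fix x
    have "(\<Sum>y\<in>UNIV. cnj (w $ x) * (\<chi> i j. of_bool (i = j)) $ x $ y * w $ y)
       = (\<Sum>y\<in>UNIV. (cnj (w $ x) * w $ y) * of_bool (x = y))"
      by (simp add: mult_ac)
    also have "\<dots> = cnj (w $ x) * w $ x" by simp
    finally show "(\<Sum>y\<in>UNIV. cnj (w $ x) * (\<chi> i j. of_bool (i = j)) $ x $ y * w $ y) = cnj (w $ x) * w $ x" .
  qed
  also have "\<dots> = of_real (nsq w)"
    by (simp add: nsq_def mult.commute complex_mult_cnj cmod_power2 flip: of_real_power)
  finally show ?thesis .
qed

lemma unitaryD: "U \<in> unitary_group \<Longrightarrow> adj U ** U = mat 1"
  by (simp add: unitary_group_def)

lemma nsq_unitary: "U \<in> unitary_group \<Longrightarrow> nsq (U *v w) = nsq w"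
  using qf_mult[of "mat 1" U w] qf_one[of "U *v w"] qf_one[of w]
  by (simp add: unitaryD)

lemma norm_nsq: "norm w = sqrt (nsq w)"
  by (simp add: norm_vec_def L2_set_def nsq_def)

lemma cont_mmult: "continuous_on UNIV (\<lambda>U::'n::finite qmat. (V::'n qmat) ** U)"
  unfolding matrix_matrix_mult_def by (intro continuous_intros)

lemma cont_mvmult: "continuous_on UNIV (\<lambda>U::'n::finite qmat. U *v (w::'n qvec))"
  unfolding matrix_vector_mult_def by (intro continuous_intros)

lemma cont_mvmult2: "continuous_on UNIV (\<lambda>w::'n::finite qvec. (U::'n qmat) *v w)"
  unfolding matrix_vector_mult_def by (intro continuous_intros)

lemma cont_compose_mv: "continuous_on UNIV f \<Longrightarrow> continuous_on UNIV (\<lambda>w::'n::finite qvec. f ((U::'n qmat) *v w))"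
  using continuous_on_compose[OF cont_mvmult2[of U], of f] continuous_on_subset by (fastforce simp: o_def)

lemma sphere_nsq: "nsq (w::'n::finite qvec) = 1 \<longleftrightarrow> w \<in> sphere 0 1"
  by (simp add: norm_nsq)

lemma cont_bounded_sphere:
  assumes "continuous_on UNIV (f :: 'n::finite qvec \<Rightarrow> real)"
  obtains B where "\<And>w. nsq w = 1 \<Longrightarrow> \<bar>f w\<bar> \<le> B"
proof -
  have "compact (f ` sphere 0 1)"
    by (rule compact_continuous_image[OF continuous_on_subset[OF assms]]) auto
  then obtain B where "\<forall>x\<in>f ` sphere 0 1. norm x \<le> B"
    using compact_imp_bounded bounded_iff by metis
  then have "\<And>w. nsq w = 1 \<Longrightarrow> \<bar>f w\<bar> \<le> B"
    by (simp add: sphere_nsq)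
  then show ?thesis using that by blast
qed

locale haar_ctx =
  fixes \<mu> :: "'n::finite qmat measure"
  assumes haar: "haar_unitary \<mu>"
begin

lemma prob: "prob_space \<mu>" using haar by (simp add: haar_unitary_def)

lemma sets_eq: "sets \<mu> = sets borel" using haar by (simp add: haar_unitary_def)

lemma meas_eq: "measurable \<mu> = measurable borel"
  by (intro ext measurable_cong_sets) (simp_all add: sets_eq)

lemma AE_unitary: "AE U in \<mu>. U \<in> unitary_group"
proof -
  have e1: "emeasure \<mu> unitary_group = 1" using haar by (simp add: haar_unitary_def)
  then have s: "unitary_group \<in> sets \<mu>" using emeasure_notin_sets by fastforce
  have "measure \<mu> unitary_group = 1" using e1 by (simp add: measure_def)
  then show ?thesis using prob_space.AE_in_set_eq_1[OF prob s] by simp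
qed

lemma inv_integral:
  assumes V: "V \<in> unitary_group" and g: "(g :: 'n qmat \<Rightarrow> real) \<in> borel_measurable borel"
  shows "(\<integral>U. g (V ** U) \<partial>\<mu>) = (\<integral>U. g U \<partial>\<mu>)"
proof -
  have m: "(\<lambda>U. V ** U) \<in> measurable \<mu> borel"
    unfolding meas_eq by (intro borel_measurable_continuous_onI cont_mmult)
  have "distr \<mu> borel (\<lambda>U. V ** U) = \<mu>" using haar V by (simp add: haar_unitary_def)
  then have "(\<integral>U. g U \<partial>\<mu>) = (\<integral>U. g U \<partial>(distr \<mu> borel (\<lambda>U. V ** U)))" by simp
  also have "\<dots> = (\<integral>U. g (V ** U) \<partial>\<mu>)" using integral_distr[OF m g] by simp
  finally show ?thesis by simp
qed

definition L :: "'n qvec \<Rightarrow> ('n qvec \<Rightarrow> real) \<Rightarrow> real" where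
  "L \<phi> f = (\<integral>U. f (U *v \<phi>) \<partial>\<mu>)"

lemma meas_comp:
  assumes "continuous_on UNIV f"
  shows "(\<lambda>U. f (U *v \<phi>)) \<in> borel_measurable \<mu>"
proof -
  have "continuous_on UNIV (\<lambda>U. f (U *v \<phi>))"
    using continuous_on_compose[OF cont_mvmult[of \<phi>], of f] assms continuous_on_subset by (fastforce simp: o_def)
  then show ?thesis unfolding meas_eq by (rule borel_measurable_continuous_onI)
qed

lemma integrable_comp:
  assumes f: "continuous_on UNIV (f :: 'n qvec \<Rightarrow> real)" and \<phi>: "nsq \<phi> = 1"
  shows "integrable \<mu> (\<lambda>U. f (U *v \<phi>))"
proof -
  obtain B where B: "\<And>w. nsq w = 1 \<Longrightarrow> \<bar>f w\<bar> \<le> B" using cont_bounded_sphere[OF f] by blast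
  have "AE U in \<mu>. norm (f (U *v \<phi>)) \<le> norm B"
  proof (rule AE_mp[OF AE_unitary], intro AE_I2 impI)
    fix U :: "'n qmat" assume "U \<in> unitary_group"
    then have "nsq (U *v \<phi>) = 1" using \<phi> by (simp add: nsq_unitary)
    then have "\<bar>f (U *v \<phi>)\<bar> \<le> B" by (rule B)
    then show "norm (f (U *v \<phi>)) \<le> norm B" by simp
  qed
  moreover have "integrable \<mu> (\<lambda>_. B)"
    using prob_space.finite_measure[OF prob] by (simp add: finite_measure.integrable_const)
  ultimately show ?thesis
    using Bochner_Integration.integrable_bound[of \<mu> "\<lambda>_. B" "\<lambda>U. f (U *v \<phi>)"] meas_comp[OF f, of \<phi>] by blast
qed

end

definition tc :: "('n::finite\<Rightarrow>bool) \<Rightarrow> ('n\<Rightarrow>bool) \<Rightarrow> complex \<Rightarrow> complex \<Rightarrow> complex \<Rightarrow> complex \<Rightarrow> 'n qmat" where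
  "tc a b \<alpha> \<beta> \<gamma> \<delta> = (\<chi> x y. if x = a then (if y = a then \<alpha> else if y = b then \<beta> else 0)
     else if x = b then (if y = a then \<gamma> else if y = b then \<delta> else 0) else (if x = y then 1 else 0))"

lemma sum_two_delta:
  fixes a b :: "'n::finite \<Rightarrow> bool"
  assumes "a \<noteq> b"
  shows "(\<Sum>y\<in>UNIV. (if y = a then \<alpha> else if y = b then \<beta> else 0) * (w y::complex)) = \<alpha> * w a + \<beta> * w b"
proof -
  have "(\<Sum>y\<in>UNIV. (if y = a then \<alpha> else if y = b then \<beta> else 0) * w y)
      = (\<Sum>y\<in>UNIV. (if y = a then \<alpha> * w y else 0) + (if y = b then \<beta> * w y else 0))"
    using assms by (intro sum.cong) auto
  also have "\<dots> = \<alpha> * w a + \<beta> * w b" by (simp add: sum.distrib)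
  finally show ?thesis .
qed

lemma tc_apply:
  assumes "a \<noteq> b"
  shows "(tc a b \<alpha> \<beta> \<gamma> \<delta> *v w) $ x = (if x = a then \<alpha> * w$a + \<beta> * w$b
      else if x = b then \<gamma> * w$a + \<delta> * w$b else w$x)"
proof -
  have 1: "(\<Sum>y\<in>UNIV. (if x = y then 1 else 0) * w $ y) = w $ x"
    by (simp add: of_bool_def[symmetric])
  show ?thesis
    using assms by (simp add: tc_def matrix_vector_mult_def sum_two_delta 1)
qed

lemma mmult_col: "(A ** B) $ x $ y = (A *v (\<chi> k. B$k$y)) $ x"
  by (simp add: matrix_matrix_mult_def matrix_vector_mult_def)

lemma tc_mult:
  assumes "a \<noteq> b"
  shows "tc a b \<alpha> \<beta> \<gamma> \<delta> ** tc a b \<alpha>' \<beta>' \<gamma>' \<delta>' =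
     tc a b (\<alpha>*\<alpha>'+\<beta>*\<gamma>') (\<alpha>*\<beta>'+\<beta>*\<delta>') (\<gamma>*\<alpha>'+\<delta>*\<gamma>') (\<gamma>*\<beta>'+\<delta>*\<delta>')"
  using assms unfolding vec_eq_iff mmult_col tc_apply[OF assms]
  by (auto simp: tc_def)

lemma tc_adj: "adj (tc a b \<alpha> \<beta> \<gamma> \<delta>) = tc a b (cnj \<alpha>) (cnj \<gamma>) (cnj \<beta>) (cnj \<delta>)"
  by (auto simp: vec_eq_iff adj_def tc_def)

lemma tc_id: "a \<noteq> b \<Longrightarrow> tc a b 1 0 0 1 = mat 1"
  by (auto simp: vec_eq_iff tc_def mat_def)

lemma tc_unitary:
  assumes "a \<noteq> b"
    and "\<alpha> * cnj \<alpha> + \<beta> * cnj \<beta> = 1" "\<alpha> * cnj \<gamma> + \<beta> * cnj \<delta> = 0" "\<gamma> * cnj \<gamma> + \<delta> * cnj \<delta> = 1"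
    and "cnj \<alpha> * \<alpha> + cnj \<gamma> * \<gamma> = 1" "cnj \<alpha> * \<beta> + cnj \<gamma> * \<delta> = 0" "cnj \<beta> * \<beta> + cnj \<delta> * \<delta> = 1"
  shows "tc a b \<alpha> \<beta> \<gamma> \<delta> \<in> unitary_group"
proof -
  have c1: "\<gamma> * cnj \<alpha> + \<delta> * cnj \<beta> = 0"
    using arg_cong[OF assms(3), of cnj] by (simp add: mult.commute)
  have c2: "cnj \<beta> * \<alpha> + cnj \<delta> * \<gamma> = 0"
    using arg_cong[OF assms(6), of cnj] by (simp add: mult.commute)
  show ?thesis
    unfolding unitary_group_def using assms c1 c2
    by (simp add: tc_adj tc_mult tc_id)
qed

definition q :: "('n::finite\<Rightarrow>bool) \<Rightarrow> 'n qvec \<Rightarrow> real" where "q x w = (cmod (w$x))^2"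
definition r :: "('n::finite\<Rightarrow>bool) \<Rightarrow> ('n\<Rightarrow>bool) \<Rightarrow> 'n qvec \<Rightarrow> real" where "r a b w = Re (w$a * cnj (w$b))"
definition s :: "('n::finite\<Rightarrow>bool) \<Rightarrow> ('n\<Rightarrow>bool) \<Rightarrow> 'n qvec \<Rightarrow> real" where "s a b w = Im (w$a * cnj (w$b))"

lemma cont_q[continuous_intros]: "continuous_on A (\<lambda>w. q x w)"
  unfolding q_def by (intro continuous_intros)
lemma cont_r[continuous_intros]: "continuous_on A (\<lambda>w. r a b w)"
  unfolding r_def by (intro continuous_intros)
lemma cont_s[continuous_intros]: "continuous_on A (\<lambda>w. s a b w)"
  unfolding s_def by (intro continuous_intros)

lemma rs_sq: "(r a b w)^2 + (s a b w)^2 = q a w * q b w"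
  unfolding r_def s_def q_def
  by (simp add: cmod_power2) (simp add: power2_eq_square algebra_simps)

lemma q_add: "(cmod (z + u))^2 = (cmod z)^2 + (cmod u)^2 + 2 * Re (z * cnj u)"
  by (simp add: cmod_power2) (simp add: power2_eq_square algebra_simps)
lemma q_diff: "(cmod (z - u))^2 = (cmod z)^2 + (cmod u)^2 - 2 * Re (z * cnj u)"
  by (simp add: cmod_power2) (simp add: power2_eq_square algebra_simps)

context haar_ctx begin

definition E :: "'n qvec \<Rightarrow> ('n qvec \<Rightarrow> real) \<Rightarrow> real" where "E \<phi> f = L \<phi> f"

end

locale haar_vec = haar_ctx \<mu> for \<mu> :: "'n::finite qmat measure" +
  fixes \<phi> :: "'n qvec"
  assumes phi: "nsq \<phi> = 1"
begin

abbreviation "Ev \<equiv> E \<phi>"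

lemma Ev_def': "Ev f = (\<integral>U. f (U *v \<phi>) \<partial>\<mu>)" by (simp add: E_def L_def)

lemma E_inv:
  assumes V: "V \<in> unitary_group" and f: "continuous_on UNIV f"
  shows "Ev (\<lambda>w. f (V *v w)) = Ev f"
proof -
  have g: "(\<lambda>U. f (U *v \<phi>)) \<in> borel_measurable borel"
    using meas_comp[OF f] unfolding meas_eq .
  show ?thesis unfolding Ev_def' using inv_integral[OF V g]
    by (simp add: matrix_vector_mul_assoc)
qed

lemma E_add:
  fixes f g :: "'n qvec \<Rightarrow> real"
  assumes "continuous_on UNIV f" "continuous_on UNIV g"
  shows "Ev (\<lambda>w. f w + g w) = Ev f + Ev g"
  unfolding Ev_def' by (rule Bochner_Integration.integral_add; rule integrable_comp[OF _ phi]; fact)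

lemma E_diff:
  fixes f g :: "'n qvec \<Rightarrow> real"
  assumes "continuous_on UNIV f" "continuous_on UNIV g"
  shows "Ev (\<lambda>w. f w - g w) = Ev f - Ev g"
  unfolding Ev_def' by (rule Bochner_Integration.integral_diff; rule integrable_comp[OF _ phi]; fact)

lemma E_cmult: "Ev (\<lambda>w. c * f w) = c * Ev f"
  unfolding Ev_def' by simp

lemma E_sum:
  fixes f :: "'i \<Rightarrow> 'n qvec \<Rightarrow> real"
  assumes "\<And>i. i \<in> A \<Longrightarrow> continuous_on UNIV (f i)"
  shows "Ev (\<lambda>w. \<Sum>i\<in>A. f i w) = (\<Sum>i\<in>A. Ev (f i))"
  unfolding Ev_def' by (rule Bochner_Integration.integral_sum) (auto intro: integrable_comp[OF _ phi] assms)

lemma E_const: "Ev (\<lambda>w. c) = c"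
  unfolding Ev_def' using prob_space.prob_space[OF prob] by simp

lemma E_cong:
  fixes f g :: "'n qvec \<Rightarrow> real"
  assumes "continuous_on UNIV f" "continuous_on UNIV g" "\<And>w. nsq w = 1 \<Longrightarrow> f w = g w"
  shows "Ev f = Ev g"
  unfolding Ev_def'
proof (rule integral_cong_AE)
  show "(\<lambda>U. f (U *v \<phi>)) \<in> borel_measurable \<mu>" by (rule meas_comp[OF assms(1)])
  show "(\<lambda>U. g (U *v \<phi>)) \<in> borel_measurable \<mu>" by (rule meas_comp[OF assms(2)])
  show "AE U in \<mu>. f (U *v \<phi>) = g (U *v \<phi>)"
  proof (rule AE_mp[OF AE_unitary], intro AE_I2 impI)
    fix U :: "'n qmat" assume "U \<in> unitary_group"
    then have "nsq (U *v \<phi>) = 1" using phi by (simp add: nsq_unitary)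
    then show "f (U *v \<phi>) = g (U *v \<phi>)" by (rule assms(3))
  qed
qed

lemma E_odd:
  assumes V: "V \<in> unitary_group" and f: "continuous_on UNIV f" and odd: "\<And>w. f (V *v w) = - f w"
  shows "Ev f = 0"
proof -
  have "Ev f = Ev (\<lambda>w. f (V *v w))" using E_inv[OF V f] by simp
  also have "\<dots> = Ev (\<lambda>w. (-1) * f w)" by (simp add: odd)
  also have "\<dots> = (-1) * Ev f" by (rule E_cmult)
  finally show ?thesis by simp
qed

end

definition hh :: complex where "hh = of_real (1 / sqrt 2)"

lemma hh_sq: "hh * hh = 1/2" "cnj hh = hh"
  by (simp_all add: hh_def flip: of_real_mult)

lemma hh_cmod: "(cmod (hh * z))^2 = (cmod z)^2 / 2"
  by (simp add: hh_def norm_mult power_mult_distrib norm_divide power_divide)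

context haar_vec begin

lemma FL_unitary: "a \<noteq> b \<Longrightarrow> tc a b (-1) 0 0 1 \<in> unitary_group"
  by (rule tc_unitary) auto
lemma PH_unitary: "a \<noteq> b \<Longrightarrow> z * cnj z = 1 \<Longrightarrow> tc a b z 0 0 1 \<in> unitary_group"
  by (rule tc_unitary) (auto simp: mult.commute)
lemma SW_unitary: "a \<noteq> b \<Longrightarrow> tc a b 0 1 1 0 \<in> unitary_group"
  by (rule tc_unitary) auto
lemma HD_unitary: "a \<noteq> b \<Longrightarrow> tc a b hh hh hh (-hh) \<in> unitary_group"
  by (rule tc_unitary) (auto simp: hh_sq)

lemma cont_comp_tc: "continuous_on UNIV (f :: 'n qvec \<Rightarrow> real) \<Longrightarrow> continuous_on UNIV (\<lambda>w. f ((U :: 'n qmat) *v w))"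
  by (rule cont_compose_mv)

lemma K1:
  assumes ab: "a \<noteq> b" and G: "continuous_on UNIV G"
    and Ginv: "\<And>w. G (tc a b (-1) 0 0 1 *v w) = G w"
  shows "Ev (\<lambda>w. r a b w * G w) = 0" "Ev (\<lambda>w. r a b w ^ 3 * G w) = 0"
proof -
  have rf: "r a b (tc a b (-1) 0 0 1 *v w) = - r a b w" for w
    using ab by (simp add: r_def tc_apply)
  show "Ev (\<lambda>w. r a b w * G w) = 0"
    by (rule E_odd[OF FL_unitary[OF ab]]) (auto intro!: continuous_intros G simp: rf Ginv)
  show "Ev (\<lambda>w. r a b w ^ 3 * G w) = 0"
    by (rule E_odd[OF FL_unitary[OF ab]]) (auto intro!: continuous_intros G simp: rf Ginv)
qed

lemma K2:
  assumes ab: "a \<noteq> b" and G: "continuous_on UNIV G"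
    and Ginv: "\<And>w. G (tc a b \<i> 0 0 1 *v w) = G w"
  shows "Ev (\<lambda>w. r a b w ^ 2 * G w) = Ev (\<lambda>w. q a w * q b w * G w) / 2"
proof -
  have rf: "r a b (tc a b \<i> 0 0 1 *v w) = - s a b w" for w
    using ab by (simp add: r_def s_def tc_apply)
  have "Ev (\<lambda>w. r a b w ^ 2 * G w) = Ev (\<lambda>w. r a b (tc a b \<i> 0 0 1 *v w) ^ 2 * G (tc a b \<i> 0 0 1 *v w))"
    by (rule E_inv[OF PH_unitary[OF ab], symmetric]) (auto intro!: continuous_intros G)
  also have "\<dots> = Ev (\<lambda>w. s a b w ^ 2 * G w)" by (simp add: rf Ginv)
  finally have 1: "Ev (\<lambda>w. r a b w ^ 2 * G w) = Ev (\<lambda>w. s a b w ^ 2 * G w)" .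
  have "Ev (\<lambda>w. q a w * q b w * G w) = Ev (\<lambda>w. r a b w ^ 2 * G w + s a b w ^ 2 * G w)"
    by (simp flip: rs_sq add: algebra_simps)
  also have "\<dots> = Ev (\<lambda>w. r a b w ^ 2 * G w) + Ev (\<lambda>w. s a b w ^ 2 * G w)"
    by (rule E_add) (auto intro!: continuous_intros G)
  finally show ?thesis using 1 by simp
qed

end

context haar_vec begin

lemmas Esplit = E_add E_diff E_cmult
lemmas cont_simps = continuous_on_add continuous_on_diff continuous_on_mult continuous_on_power
  continuous_on_const cont_q cont_r cont_s continuous_on_minus

lemma K3:
  assumes ab: "a \<noteq> b"
  shows "Ev (\<lambda>w. r a b w ^ 4) = 3/8 * Ev (\<lambda>w. q a w ^ 2 * q b w ^ 2)"
proof -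
  let ?R = "Ev (\<lambda>w. r a b w ^ 4)" and ?S = "Ev (\<lambda>w. s a b w ^ 4)"
  let ?X = "Ev (\<lambda>w. r a b w ^ 2 * s a b w ^ 2)"
  have rf: "r a b (tc a b \<i> 0 0 1 *v w) = - s a b w" for w
    using ab by (simp add: r_def s_def tc_apply)
  have "?R = Ev (\<lambda>w. r a b (tc a b \<i> 0 0 1 *v w) ^ 4)"
    by (rule E_inv[OF PH_unitary[OF ab], symmetric]) (auto intro!: continuous_intros)
  also have "\<dots> = ?S" by (simp add: rf)
  finally have RS: "?R = ?S" .
  have rsw: "r a b (tc a b 0 1 1 0 *v w) = r a b w" "s a b (tc a b 0 1 1 0 *v w) = - s a b w" for w
    using ab by (simp_all add: r_def s_def tc_apply mult.commute)
  have o1: "Ev (\<lambda>w. r a b w ^ 3 * s a b w) = 0"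
    by (rule E_odd[OF SW_unitary[OF ab]]) (auto intro!: continuous_intros simp: rsw)
  have o2: "Ev (\<lambda>w. r a b w * s a b w ^ 3) = 0"
    by (rule E_odd[OF SW_unitary[OF ab]]) (auto intro!: continuous_intros simp: rsw)
  define p :: complex where "p = (3 + 4 * \<i>) / 5"
  have pu: "p * cnj p = 1" by (simp add: p_def complex_eq_iff)
  have rp: "r a b (tc a b p 0 0 1 *v w) = 3/5 * r a b w - 4/5 * s a b w" for w
    using ab by (simp add: r_def s_def tc_apply p_def) (simp add: field_simps)
  have "?R = Ev (\<lambda>w. r a b (tc a b p 0 0 1 *v w) ^ 4)"
    by (rule E_inv[OF PH_unitary[OF ab pu], symmetric]) (auto intro!: continuous_intros)
  also have "\<dots> = Ev (\<lambda>w. 81/625 * r a b w ^ 4 - 432/625 * (r a b w ^ 3 * s a b w)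
        + 864/625 * (r a b w ^ 2 * s a b w ^ 2) - 768/625 * (r a b w * s a b w ^ 3) + 256/625 * s a b w ^ 4)"
    by (rule arg_cong[where f=Ev], rule ext, simp only: rp, algebra)
  also have "\<dots> = 81/625 * ?R - 432/625 * Ev (\<lambda>w. r a b w ^ 3 * s a b w) + 864/625 * ?X
        - 768/625 * Ev (\<lambda>w. r a b w * s a b w ^ 3) + 256/625 * ?S"
    by (simp only: Esplit cont_simps)
  finally have eq1: "?R = 81/625 * ?R + 864/625 * ?X + 256/625 * ?S" using o1 o2 by simp
  have "Ev (\<lambda>w. q a w ^ 2 * q b w ^ 2) = Ev (\<lambda>w. r a b w ^ 4 + 2 * (r a b w ^ 2 * s a b w ^ 2) + s a b w ^ 4)"
    by (rule arg_cong[where f=Ev], rule ext) (subst power_mult_distrib[symmetric], subst rs_sq[symmetric], algebra)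
  also have "\<dots> = ?R + 2 * ?X + ?S"
    by (simp only: Esplit cont_simps)
  finally show ?thesis using eq1 RS by simp
qed

end

lemma qFL: "a \<noteq> b \<Longrightarrow> q x (tc a b (-1) 0 0 1 *v w) = q x w"
  by (simp add: q_def tc_apply)
lemma qPH: "a \<noteq> b \<Longrightarrow> cmod z = 1 \<Longrightarrow> q x (tc a b z 0 0 1 *v w) = q x w"
  by (simp add: q_def tc_apply norm_mult)
lemma qSW: "a \<noteq> b \<Longrightarrow> q x (tc a b 0 1 1 0 *v w) = (if x = a then q b w else if x = b then q a w else q x w)"
  by (simp add: q_def tc_apply)
lemma qHD: assumes ab: "a \<noteq> b" shows "q x (tc a b hh hh hh (-hh) *v w) =
   (if x = a then (q a w + q b w)/2 + r a b w else if x = b then (q a w + q b w)/2 - r a b w else q x w)"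
proof -
  have 1: "(tc a b hh hh hh (-hh) *v w) $ a = hh * (w$a + w$b)"
    using ab by (simp add: tc_apply distrib_left)
  have 2: "(tc a b hh hh hh (-hh) *v w) $ b = hh * (w$a - w$b)"
    using ab by (simp add: tc_apply right_diff_distrib)
  have 3: "x \<noteq> a \<Longrightarrow> x \<noteq> b \<Longrightarrow> (tc a b hh hh hh (-hh) *v w) $ x = w $ x"
    using ab by (simp add: tc_apply)
  show ?thesis
  proof (cases "x = a")
    case True then show ?thesis by (simp add: q_def r_def 1 hh_cmod q_add add_divide_distrib)
  next
    case False
    show ?thesis
    proof (cases "x = b")
      case True then show ?thesis using False ab by (simp add: q_def r_def 2 hh_cmod q_diff diff_divide_distrib add_divide_distrib)
    next
      case False2: False
      then show ?thesis using False unfolding q_def using 3 by simp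
    qed
  qed
qed

lemma cmod_i: "cmod \<i> = 1" by simp

lemma poly1: "(t/2 + (z::real))^4 = 1/16 * t ^ 4 + 1/2 * (z * t ^ 3) + 3/2 * (z^2 * t^2) + 2 * (z ^ 3 * t) + z^4"
  by (simp add: field_simps power2_eq_square power3_eq_cube power4_eq_xxxx)
lemma poly2: "(t/2 + (z::real))^3 * ((t/2 + z) + (t/2 - z)) = 1/8 * t ^ 4 + 3/4 * (z * t ^ 3) + 3/2 * (z^2 * t^2) + 1 * (z ^ 3 * t)"
  by (simp add: field_simps power2_eq_square power3_eq_cube power4_eq_xxxx)
lemma poly3: "((x::real) + y) ^ 4 = x ^ 4 + 4 * (x ^ 3 * y) + 6 * (x ^ 2 * y ^ 2) + 4 * (x * y ^ 3) + y ^ 4"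
  by (simp add: field_simps power2_eq_square power3_eq_cube power4_eq_xxxx)
lemma poly4: "(x::real) * y * (x + y) ^ 2 = x ^ 3 * y + 2 * (x ^ 2 * y ^ 2) + x * y ^ 3"
  by (simp add: field_simps power2_eq_square power3_eq_cube power4_eq_xxxx)
lemma poly5: "(x::real) ^ 3 * (x + y) = x ^ 4 + x ^ 3 * y"
  by (simp add: field_simps power2_eq_square power3_eq_cube power4_eq_xxxx)

context haar_vec begin

lemma swap_inv:
  assumes ab: "a \<noteq> b" and f: "continuous_on UNIV f"
  shows "Ev (\<lambda>w. f (tc a b 0 1 1 0 *v w)) = Ev f"
  by (rule E_inv[OF SW_unitary[OF ab] f])

lemma pair:
  assumes ab: "a \<noteq> b"
  shows "Ev (\<lambda>w. q a w ^ 3 * q b w) = Ev (\<lambda>w. q a w ^ 4) / 4"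
    and "Ev (\<lambda>w. q a w ^ 2 * q b w ^ 2) = Ev (\<lambda>w. q a w ^ 4) / 6"
proof -
  have ba: "(b = a) = False" using ab by auto
  have aa: "(a = a) = True" by simp
  have bb: "(b = b) = True" by simp
  define A4 where "A4 = Ev (\<lambda>w. q a w ^ 4)"
  define B4 where "B4 = Ev (\<lambda>w. q b w ^ 4)"
  define A31 where "A31 = Ev (\<lambda>w. q a w ^ 3 * q b w)"
  define A13 where "A13 = Ev (\<lambda>w. q a w * q b w ^ 3)"
  define A22 where "A22 = Ev (\<lambda>w. q a w ^ 2 * q b w ^ 2)"
  have B4: "B4 = A4"
  proof -
    have "A4 = Ev (\<lambda>w. q a (tc a b 0 1 1 0 *v w) ^ 4)"
      unfolding A4_def by (rule swap_inv[OF ab, symmetric]) (intro continuous_intros)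
    also have "\<dots> = B4" unfolding B4_def using ab by (simp add: qSW)
    finally show ?thesis by simp
  qed
  have A13: "A13 = A31"
  proof -
    have "A31 = Ev (\<lambda>w. q a (tc a b 0 1 1 0 *v w) ^ 3 * q b (tc a b 0 1 1 0 *v w))"
      unfolding A31_def by (rule swap_inv[OF ab, symmetric]) (intro continuous_intros)
    also have "\<dots> = A13" unfolding A13_def using ab by (simp add: qSW mult.commute)
    finally show ?thesis by simp
  qed
  have T4: "Ev (\<lambda>w. (q a w + q b w) ^ 4) = A4 + 4 * A31 + 6 * A22 + 4 * A13 + B4"
  proof -
    have "Ev (\<lambda>w. (q a w + q b w) ^ 4) = Ev (\<lambda>w. q a w ^ 4 + 4 * (q a w ^ 3 * q b w) + 6 * (q a w ^ 2 * q b w ^ 2)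
       + 4 * (q a w * q b w ^ 3) + q b w ^ 4)"
      by (rule arg_cong[where f=Ev], rule ext, rule poly3)
    also have "\<dots> = A4 + 4 * A31 + 6 * A22 + 4 * A13 + B4"
      unfolding A4_def B4_def A31_def A13_def A22_def by (simp only: Esplit cont_simps)
    finally show ?thesis .
  qed
  have T22: "Ev (\<lambda>w. q a w * q b w * (q a w + q b w) ^ 2) = A31 + 2 * A22 + A13"
  proof -
    have "Ev (\<lambda>w. q a w * q b w * (q a w + q b w) ^ 2) = Ev (\<lambda>w. q a w ^ 3 * q b w + 2 * (q a w ^ 2 * q b w ^ 2)
       + q a w * q b w ^ 3)"
      by (rule arg_cong[where f=Ev], rule ext, rule poly4)
    also have "\<dots> = A31 + 2 * A22 + A13"
      unfolding A31_def A13_def A22_def by (simp only: Esplit cont_simps)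
    finally show ?thesis .
  qed
  have K1a: "Ev (\<lambda>w. r a b w * (q a w + q b w) ^ 3) = 0"
    by (rule K1(1)[OF ab, of "\<lambda>w. (q a w + q b w) ^ 3"]) (intro continuous_intros | simp add: qFL[OF ab])+
  have K1b: "Ev (\<lambda>w. r a b w ^ 3 * (q a w + q b w)) = 0"
    by (rule K1(2)[OF ab, of "\<lambda>w. (q a w + q b w)"]) (intro continuous_intros | simp add: qFL[OF ab])+
  have K2a: "Ev (\<lambda>w. r a b w ^ 2 * (q a w + q b w) ^ 2) = Ev (\<lambda>w. q a w * q b w * (q a w + q b w) ^ 2) / 2"
    by (rule K2[OF ab, of "\<lambda>w. (q a w + q b w) ^ 2"]) (intro continuous_intros | simp add: qPH[OF ab])+
  have K3a: "Ev (\<lambda>w. r a b w ^ 4) = 3/8 * A22" unfolding A22_def by (rule K3[OF ab])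
  have P1: "A4 = 1/16 * Ev (\<lambda>w. (q a w + q b w) ^ 4) + 1/2 * Ev (\<lambda>w. r a b w * (q a w + q b w) ^ 3)
      + 3/2 * Ev (\<lambda>w. r a b w ^ 2 * (q a w + q b w) ^ 2) + 2 * Ev (\<lambda>w. r a b w ^ 3 * (q a w + q b w))
      + Ev (\<lambda>w. r a b w ^ 4)"
  proof -
    have "A4 = Ev (\<lambda>w. q a (tc a b hh hh hh (-hh) *v w) ^ 4)"
      unfolding A4_def by (rule E_inv[OF HD_unitary[OF ab], symmetric]) (intro continuous_intros)
    also have "\<dots> = Ev (\<lambda>w. 1/16 * (q a w + q b w) ^ 4 + 1/2 * (r a b w * (q a w + q b w) ^ 3)
      + 3/2 * (r a b w ^ 2 * (q a w + q b w) ^ 2) + 2 * (r a b w ^ 3 * (q a w + q b w))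
      + r a b w ^ 4)"
      by (rule arg_cong[where f=Ev], rule ext, simp only: qHD[OF ab] if_True aa, rule poly1)
    also have "\<dots> = 1/16 * Ev (\<lambda>w. (q a w + q b w) ^ 4) + 1/2 * Ev (\<lambda>w. r a b w * (q a w + q b w) ^ 3)
      + 3/2 * Ev (\<lambda>w. r a b w ^ 2 * (q a w + q b w) ^ 2) + 2 * Ev (\<lambda>w. r a b w ^ 3 * (q a w + q b w))
      + Ev (\<lambda>w. r a b w ^ 4)"
      by (simp only: Esplit cont_simps)
    finally show ?thesis .
  qed
  have P2: "A4 + A31 = 1/8 * Ev (\<lambda>w. (q a w + q b w) ^ 4) + 3/4 * Ev (\<lambda>w. r a b w * (q a w + q b w) ^ 3)
      + 3/2 * Ev (\<lambda>w. r a b w ^ 2 * (q a w + q b w) ^ 2) + 1 * Ev (\<lambda>w. r a b w ^ 3 * (q a w + q b w))"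
  proof -
    have "A4 + A31 = Ev (\<lambda>w. q a w ^ 3 * (q a w + q b w))"
    proof -
      have "Ev (\<lambda>w. q a w ^ 3 * (q a w + q b w)) = Ev (\<lambda>w. q a w ^ 4 + q a w ^ 3 * q b w)"
        by (rule arg_cong[where f=Ev], rule ext, rule poly5)
      also have "\<dots> = A4 + A31" unfolding A4_def A31_def by (simp only: Esplit cont_simps)
      finally show ?thesis by simp
    qed
    also have "\<dots> = Ev (\<lambda>w. q a (tc a b hh hh hh (-hh) *v w) ^ 3 * (q a (tc a b hh hh hh (-hh) *v w) + q b (tc a b hh hh hh (-hh) *v w)))"
      by (rule E_inv[OF HD_unitary[OF ab], symmetric]) (intro continuous_intros)
    also have "\<dots> = Ev (\<lambda>w. 1/8 * (q a w + q b w) ^ 4 + 3/4 * (r a b w * (q a w + q b w) ^ 3)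
      + 3/2 * (r a b w ^ 2 * (q a w + q b w) ^ 2) + 1 * (r a b w ^ 3 * (q a w + q b w)))"
      by (rule arg_cong[where f=Ev], rule ext, simp only: qHD[OF ab] if_True if_False aa bb ba, rule poly2)
    also have "\<dots> = 1/8 * Ev (\<lambda>w. (q a w + q b w) ^ 4) + 3/4 * Ev (\<lambda>w. r a b w * (q a w + q b w) ^ 3)
      + 3/2 * Ev (\<lambda>w. r a b w ^ 2 * (q a w + q b w) ^ 2) + 1 * Ev (\<lambda>w. r a b w ^ 3 * (q a w + q b w))"
      by (simp only: Esplit cont_simps)
    finally show ?thesis .
  qed
  have "A31 = A4 / 4" "A22 = A4 / 6"
    using P1 P2 T4 T22 K1a K1b K2a K3a B4 A13 by linarith+
  then show "Ev (\<lambda>w. q a w ^ 3 * q b w) = Ev (\<lambda>w. q a w ^ 4) / 4"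
    and "Ev (\<lambda>w. q a w ^ 2 * q b w ^ 2) = Ev (\<lambda>w. q a w ^ 4) / 6"
    unfolding A4_def A31_def A22_def by auto
qed

end

definition Wt :: "'a \<Rightarrow> 'a \<Rightarrow> 'a \<Rightarrow> 'a \<Rightarrow> real" where
 "Wt a b c e = (1 + of_bool (b = a)) * (1 + of_bool (c = a) + of_bool (c = b))
     * (1 + of_bool (e = a) + of_bool (e = b) + of_bool (e = c))"

lemma Wt_sum:
  fixes f :: "'a::finite \<Rightarrow> real"
  shows "(\<Sum>a\<in>UNIV. \<Sum>b\<in>UNIV. \<Sum>c\<in>UNIV. \<Sum>e\<in>UNIV. f a * f b * f c * f e * Wt a b c e)
   = (\<Sum>a\<in>UNIV. f a)^4 + 6 * (\<Sum>a\<in>UNIV. f a)^2 * (\<Sum>a\<in>UNIV. f a^2) + 3 * (\<Sum>a\<in>UNIV. f a^2)^2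
     + 8 * (\<Sum>a\<in>UNIV. f a) * (\<Sum>a\<in>UNIV. f a^3) + 6 * (\<Sum>a\<in>UNIV. f a^4)"
proof -
  define s1 where "s1 = (\<Sum>a\<in>UNIV. f a)"
  define s2 where "s2 = (\<Sum>a\<in>UNIV. f a^2)"
  define s3 where "s3 = (\<Sum>a\<in>UNIV. f a^3)"
  define s4 where "s4 = (\<Sum>a\<in>UNIV. f a^4)"
  have nest: "(\<Sum>a\<in>UNIV. \<Sum>b\<in>UNIV. \<Sum>c\<in>UNIV. \<Sum>e\<in>UNIV. f a * f b * f c * f e * Wt a b c e)
    = (\<Sum>a\<in>UNIV. f a * (\<Sum>b\<in>UNIV. f b * (1 + of_bool (b = a)) * (\<Sum>c\<in>UNIV. f c * (1 + of_bool (c = a) + of_bool (c = b))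
        * (\<Sum>e\<in>UNIV. f e * (1 + of_bool (e = a) + of_bool (e = b) + of_bool (e = c))))))"
    by (simp add: Wt_def sum_distrib_left mult_ac)
  have stepE: "\<And>a b c. (\<Sum>e\<in>UNIV. f e * (1 + of_bool (e = a) + of_bool (e = b) + of_bool (e = c))) = s1 + f a + f b + f c"
    by (simp add: distrib_left sum.distrib s1_def)
  have stepC: "\<And>a b K. (\<Sum>c\<in>UNIV. f c * (1 + of_bool (c = a) + of_bool (c = b)) * (K + f c))
      = K * s1 + s2 + (K * f a + f a^2) + (K * f b + f b^2)"
  proof -
    fix a b K
    have "\<And>c. f c * (1 + of_bool (c = a) + of_bool (c = b)) * (K + f c)
       = K * f c + f c^2 + (K * f c + f c^2) * of_bool (c = a) + (K * f c + f c^2) * of_bool (c = b)"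
      by (simp add: algebra_simps power2_eq_square)
    then show "(\<Sum>c\<in>UNIV. f c * (1 + of_bool (c = a) + of_bool (c = b)) * (K + f c))
      = K * s1 + s2 + (K * f a + f a^2) + (K * f b + f b^2)"
      by (simp add: sum.distrib sum_distrib_left[symmetric] s1_def s2_def)
  qed
  have stepB: "\<And>a \<alpha> \<beta>. (\<Sum>b\<in>UNIV. f b * (1 + of_bool (b = a)) * (\<alpha> + \<beta> * f b + 2 * f b^2))
      = \<alpha> * s1 + \<beta> * s2 + 2 * s3 + (\<alpha> * f a + \<beta> * f a^2 + 2 * f a^3)"
  proof -
    fix a \<alpha> \<beta>
    have "\<And>b. f b * (1 + of_bool (b = a)) * (\<alpha> + \<beta> * f b + 2 * f b^2)
       = \<alpha> * f b + \<beta> * f b^2 + 2 * f b^3 + (\<alpha> * f b + \<beta> * f b^2 + 2 * f b^3) * of_bool (b = a)"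
      by (simp add: algebra_simps power2_eq_square power3_eq_cube)
    then show "(\<Sum>b\<in>UNIV. f b * (1 + of_bool (b = a)) * (\<alpha> + \<beta> * f b + 2 * f b^2))
      = \<alpha> * s1 + \<beta> * s2 + 2 * s3 + (\<alpha> * f a + \<beta> * f a^2 + 2 * f a^3)"
      by (simp add: sum.distrib sum_distrib_left[symmetric] s1_def s2_def s3_def)
  qed
  have stepA: "\<And>g0 g1 g2 g3. (\<Sum>a\<in>UNIV. f a * (g0 + g1 * f a + g2 * f a^2 + g3 * f a^3))
      = g0 * s1 + g1 * s2 + g2 * s3 + g3 * s4"
  proof -
    fix g0 g1 g2 g3
    have "\<And>a. f a * (g0 + g1 * f a + g2 * f a^2 + g3 * f a^3) = g0 * f a + g1 * f a^2 + g2 * f a^3 + g3 * f a^4"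
      by (simp add: algebra_simps power2_eq_square power3_eq_cube power4_eq_xxxx)
    then show "(\<Sum>a\<in>UNIV. f a * (g0 + g1 * f a + g2 * f a^2 + g3 * f a^3)) = g0 * s1 + g1 * s2 + g2 * s3 + g3 * s4"
      by (simp add: sum.distrib sum_distrib_left[symmetric] s1_def s2_def s3_def s4_def)
  qed
  have X: "\<And>a b. (s1 + f a + f b) * s1 + s2 + ((s1 + f a + f b) * f a + (f a)^2) + ((s1 + f a + f b) * f b + (f b)^2)
     = (s1^2 + s2 + 2 * s1 * f a + 2 * (f a)^2) + (2 * s1 + 2 * f a) * f b + 2 * (f b)^2"
    by algebra
  have Y: "\<And>a. (s1^2 + s2 + 2 * s1 * f a + 2 * (f a)^2) * s1 + (2 * s1 + 2 * f a) * s2 + 2 * s3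
      + ((s1^2 + s2 + 2 * s1 * f a + 2 * (f a)^2) * f a + (2 * s1 + 2 * f a) * f a^2 + 2 * f a^3)
     = (s1^3 + 3 * s1 * s2 + 2 * s3) + (3 * s1^2 + 3 * s2) * f a + (6 * s1) * f a^2 + 6 * f a^3"
    by algebra
  have "(\<Sum>a\<in>UNIV. \<Sum>b\<in>UNIV. \<Sum>c\<in>UNIV. \<Sum>e\<in>UNIV. f a * f b * f c * f e * Wt a b c e)
     = (s1^3 + 3 * s1 * s2 + 2 * s3) * s1 + (3 * s1^2 + 3 * s2) * s2 + (6 * s1) * s3 + 6 * s4"
    unfolding nest stepE stepC X stepB Y stepA ..
  also have "\<dots> = s1^4 + 6 * s1^2 * s2 + 3 * s2^2 + 8 * s1 * s3 + 6 * s4"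
    by algebra
  finally show ?thesis unfolding s1_def s2_def s3_def s4_def .
qed

lemma poly6: "(((x::real) + y)/2 + z) * ((x + y)/2 - z) * u = 1/4 * (x^2 * u) + 1/2 * (x * y * u) + 1/4 * (y^2 * u) - z^2 * u"
  by (simp add: field_simps power2_eq_square)

context haar_vec begin

definition c0 :: real where "c0 = Ev (\<lambda>w. q (\<lambda>_. False) w ^ 4) / 24"

lemma A4_all: "Ev (\<lambda>w. q a w ^ 4) = 24 * c0"
proof (cases "a = (\<lambda>_. False)")
  case True then show ?thesis by (simp add: c0_def)
next
  case False
  have "Ev (\<lambda>w. q a w ^ 4) = Ev (\<lambda>w. q a (tc a (\<lambda>_. False) 0 1 1 0 *v w) ^ 4)"
    by (rule swap_inv[OF False, symmetric]) (intro continuous_intros)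
  also have "\<dots> = Ev (\<lambda>w. q (\<lambda>_. False) w ^ 4)" using False by (simp add: qSW)
  finally show ?thesis by (simp add: c0_def)
qed

lemma pair31: "a \<noteq> b \<Longrightarrow> Ev (\<lambda>w. q a w ^ 3 * q b w) = 6 * c0"
  using pair(1)[of a b] A4_all[of a] by simp
lemma pair22: "a \<noteq> b \<Longrightarrow> Ev (\<lambda>w. q a w ^ 2 * q b w ^ 2) = 4 * c0"
  using pair(2)[of a b] A4_all[of a] by simp

lemma HD_spect:
  fixes G :: "'n qvec \<Rightarrow> real"
  assumes ab: "a \<noteq> b" and G: "continuous_on UNIV G"
    and Ginv: "\<And>w. G (tc a b hh hh hh (-hh) *v w) = G w"
    and Gph: "\<And>w. G (tc a b \<i> 0 0 1 *v w) = G w"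
  shows "Ev (\<lambda>w. q a w * q b w * G w) =
    (Ev (\<lambda>w. q a w ^ 2 * G w) + Ev (\<lambda>w. q b w ^ 2 * G w)) / 4"
proof -
  have aa: "(a = a) = True" by simp
  have bb: "(b = b) = True" by simp
  have ba: "(b = a) = False" using ab by auto
  let ?Y = "Ev (\<lambda>w. q a w * q b w * G w)"
  have "?Y = Ev (\<lambda>w. q a (tc a b hh hh hh (-hh) *v w) * q b (tc a b hh hh hh (-hh) *v w) * G (tc a b hh hh hh (-hh) *v w))"
    by (rule E_inv[OF HD_unitary[OF ab], symmetric]) (intro continuous_intros G)
  also have "\<dots> = Ev (\<lambda>w. 1/4 * (q a w ^ 2 * G w) + 1/2 * (q a w * q b w * G w) + 1/4 * (q b w ^ 2 * G w) - r a b w ^ 2 * G w)"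
    by (rule arg_cong[where f=Ev], rule ext, simp only: qHD[OF ab] if_True if_False aa bb ba Ginv, rule poly6)
  also have "\<dots> = 1/4 * Ev (\<lambda>w. q a w ^ 2 * G w) + 1/2 * ?Y + 1/4 * Ev (\<lambda>w. q b w ^ 2 * G w) - Ev (\<lambda>w. r a b w ^ 2 * G w)"
    by (simp only: Esplit cont_simps G)
  also have "Ev (\<lambda>w. r a b w ^ 2 * G w) = ?Y / 2"
    by (rule K2[OF ab G Gph])
  finally have "?Y = 1/4 * Ev (\<lambda>w. q a w ^ 2 * G w) + 1/2 * ?Y + 1/4 * Ev (\<lambda>w. q b w ^ 2 * G w) - ?Y / 2" .
  moreover have "\<And>Y A B :: real. Y = 1/4 * A + 1/2 * Y + 1/4 * B - Y/2 \<Longrightarrow> Y = (A + B)/4"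
    by (simp add: field_simps)
  ultimately show ?thesis by blast
qed

lemma triple:
  assumes "a \<noteq> b" "a \<noteq> c" "b \<noteq> c"
  shows "Ev (\<lambda>w. q a w * q b w * q c w ^ 2) = 2 * c0"
proof -
  have "Ev (\<lambda>w. q a w * q b w * q c w ^ 2) = (Ev (\<lambda>w. q a w ^ 2 * q c w ^ 2) + Ev (\<lambda>w. q b w ^ 2 * q c w ^ 2)) / 4"
    by (rule HD_spect[OF assms(1)]) (intro continuous_intros | simp add: qHD qPH assms assms[symmetric])+
  then show ?thesis using pair22[OF assms(2)] pair22[OF assms(3)] by simp
qed

lemma quad:
  assumes "a \<noteq> b" "a \<noteq> c" "a \<noteq> e" "b \<noteq> c" "b \<noteq> e" "c \<noteq> e"
  shows "Ev (\<lambda>w. q a w * q b w * (q c w * q e w)) = c0"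
proof -
  have "Ev (\<lambda>w. q a w * q b w * (q c w * q e w)) = (Ev (\<lambda>w. q a w ^ 2 * (q c w * q e w)) + Ev (\<lambda>w. q b w ^ 2 * (q c w * q e w))) / 4"
    by (rule HD_spect[OF assms(1)]) (intro continuous_intros | simp add: qHD qPH assms assms[symmetric])+
  moreover have "Ev (\<lambda>w. q a w ^ 2 * (q c w * q e w)) = 2 * c0"
  proof -
    have "Ev (\<lambda>w. q a w ^ 2 * (q c w * q e w)) = Ev (\<lambda>w. q c w * q e w * q a w ^ 2)"
      by (rule arg_cong[where f=Ev], rule ext, simp only: mult_ac)
    also have "\<dots> = 2 * c0" by (rule triple) (use assms in auto)
    finally show ?thesis .
  qed
  moreover have "Ev (\<lambda>w. q b w ^ 2 * (q c w * q e w)) = 2 * c0"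
  proof -
    have "Ev (\<lambda>w. q b w ^ 2 * (q c w * q e w)) = Ev (\<lambda>w. q c w * q e w * q b w ^ 2)"
      by (rule arg_cong[where f=Ev], rule ext, simp only: mult_ac)
    also have "\<dots> = 2 * c0" by (rule triple) (use assms in auto)
    finally show ?thesis .
  qed
  ultimately show ?thesis by simp
qed

end

context haar_vec begin

definition M where "M a b c e = Ev (\<lambda>w. q a w * q b w * q c w * q e w)"

lemma M_eq: "(\<And>w. q x1 w * q x2 w * q x3 w * q x4 w = F w) \<Longrightarrow> M x1 x2 x3 x4 = Ev F"
  unfolding M_def by (rule arg_cong[where f=Ev], rule ext) simp

lemmas pw_simps = power2_eq_square power3_eq_cube power4_eq_xxxx mult_ac

lemma M_4: "M x x x x = 24 * c0"
  by (subst M_eq[where F="\<lambda>w. q x w ^ 4"], simp add: pw_simps, simp add: A4_all)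

lemma M_31:
  assumes "y \<noteq> x"
  shows "M x x x y = 6 * c0" "M x x y x = 6 * c0" "M x y x x = 6 * c0" "M y x x x = 6 * c0"
  using assms
  by (subst M_eq[where F="\<lambda>w. q x w ^ 3 * q y w"], simp add: pw_simps, simp add: pair31)+

lemma M_31':
  assumes "y \<noteq> x"
  shows "M x y y y = 6 * c0"
  using assms
  by (subst M_eq[where F="\<lambda>w. q y w ^ 3 * q x w"], simp add: pw_simps, simp add: pair31)

lemma M_22:
  assumes "y \<noteq> x"
  shows "M x x y y = 4 * c0" "M x y x y = 4 * c0" "M x y y x = 4 * c0"
  using assms
  by (subst M_eq[where F="\<lambda>w. q x w ^ 2 * q y w ^ 2"], simp add: pw_simps, simp add: pair22)+

lemma M_211:
  assumes "y \<noteq> x" "z \<noteq> x" "z \<noteq> y"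
  shows "M x x y z = 2 * c0" "M x y x z = 2 * c0" "M x y z x = 2 * c0"
    "M y x x z = 2 * c0" "M y x z x = 2 * c0" "M y z x x = 2 * c0"
  using assms
  by (subst M_eq[where F="\<lambda>w. q y w * q z w * q x w ^ 2"], simp add: pw_simps, simp add: triple)+

lemma M_1111:
  assumes "y \<noteq> x" "z \<noteq> x" "z \<noteq> y" "u \<noteq> x" "u \<noteq> y" "u \<noteq> z"
  shows "M x y z u = c0"
  using assms
  by (subst M_eq[where F="\<lambda>w. q x w * q y w * (q z w * q u w)"], simp add: pw_simps, simp add: quad)

lemma moment: "M a b c e = c0 * Wt a b c e"
  by (cases "b = a"; cases "c = a"; cases "c = b"; cases "e = a"; cases "e = b"; cases "e = c")
     (simp_all add: Wt_def M_4 M_31 M_31' M_22 M_211 M_1111)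

lemma pow4_sum: "(\<Sum>x\<in>A. h x)^4 = (\<Sum>a\<in>A. \<Sum>b\<in>A. \<Sum>c\<in>A. \<Sum>e\<in>A. h e * h c * h b * (h a :: real))"
  by (simp add: power4_eq_xxxx sum_distrib_left sum_distrib_right mult.assoc)

lemma quartic:
  "Ev (\<lambda>w. (\<Sum>x\<in>UNIV. g x * q x w) ^ 4) = c0 * ((\<Sum>x\<in>UNIV. g x)^4 + 6 * (\<Sum>x\<in>UNIV. g x)^2 * (\<Sum>x\<in>UNIV. g x^2)
     + 3 * (\<Sum>x\<in>UNIV. g x^2)^2 + 8 * (\<Sum>x\<in>UNIV. g x) * (\<Sum>x\<in>UNIV. g x^3) + 6 * (\<Sum>x\<in>UNIV. g x^4))"
proof -
  have "Ev (\<lambda>w. (\<Sum>x\<in>UNIV. g x * q x w) ^ 4) = Ev (\<lambda>w. \<Sum>a\<in>UNIV. \<Sum>b\<in>UNIV. \<Sum>c\<in>UNIV. \<Sum>e\<in>UNIV.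
      (g a * g b * g c * g e) * (q a w * q b w * q c w * q e w))"
    by (rule arg_cong[where f=Ev], rule ext, simp only: pow4_sum, simp only: mult_ac)
  also have "\<dots> = (\<Sum>a\<in>UNIV. \<Sum>b\<in>UNIV. \<Sum>c\<in>UNIV. \<Sum>e\<in>UNIV. (g a * g b * g c * g e) * M a b c e)"
    unfolding M_def
    by (simp only: E_sum E_cmult cont_simps continuous_on_sum)
  also have "\<dots> = c0 * (\<Sum>a\<in>UNIV. \<Sum>b\<in>UNIV. \<Sum>c\<in>UNIV. \<Sum>e\<in>UNIV. g a * g b * g c * g e * Wt a b c e)"
    by (simp add: moment sum_distrib_left mult_ac)
  also have "\<dots> = c0 * ((\<Sum>x\<in>UNIV. g x)^4 + 6 * (\<Sum>x\<in>UNIV. g x)^2 * (\<Sum>x\<in>UNIV. g x^2)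
     + 3 * (\<Sum>x\<in>UNIV. g x^2)^2 + 8 * (\<Sum>x\<in>UNIV. g x) * (\<Sum>x\<in>UNIV. g x^3) + 6 * (\<Sum>x\<in>UNIV. g x^4))"
    by (simp only: Wt_sum)
  finally show ?thesis .
qed

end

definition tens :: "('n::finite \<Rightarrow> bool \<Rightarrow> bool \<Rightarrow> complex) \<Rightarrow> 'n qmat" where
  "tens F = (\<chi> x y. \<Prod>k\<in>UNIV. F k (x k) (y k))"

lemma sum_fun_prod: "(\<Sum>z::'n::finite\<Rightarrow>bool\<in>UNIV. \<Prod>k\<in>UNIV. f k (z k)) = (\<Prod>k\<in>UNIV. \<Sum>b\<in>UNIV. (f k b::'c::comm_semiring_1))"
  by (subst prod_sum_PiE) (auto simp: PiE_UNIV)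

lemma tens_mult: "tens F ** tens G = tens (\<lambda>k i j. \<Sum>l\<in>UNIV. F k i l * G k l j)"
proof -
  have "\<And>x y. (\<Sum>z\<in>UNIV. (\<Prod>k\<in>UNIV. F k (x k) (z k)) * (\<Prod>k\<in>UNIV. G k (z k) (y k)))
     = (\<Prod>k\<in>UNIV. \<Sum>l\<in>UNIV. F k (x k) l * G k l (y k))"
    by (simp add: prod.distrib[symmetric] sum_fun_prod[where f="\<lambda>k l. F k (x k) l * G k l (y k)" for x y])
  then show ?thesis by (simp add: vec_eq_iff tens_def matrix_matrix_mult_def)
qed

lemma tens_adj: "adj (tens F) = tens (\<lambda>k i j. cnj (F k j i))"
  by (simp add: vec_eq_iff tens_def adj_def cnj_prod)

lemma tens_id: "tens (\<lambda>k i j. if i = j then 1 else 0) = (mat 1 :: 'n::finite qmat)"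
proof -
  have "\<And>x y::'n\<Rightarrow>bool. (\<Prod>k\<in>UNIV. (if x k = y k then 1 else 0::complex)) = (if x = y then 1 else 0)"
  proof -
    fix x y :: "'n \<Rightarrow> bool"
    show "(\<Prod>k\<in>UNIV. (if x k = y k then 1 else 0::complex)) = (if x = y then 1 else 0)"
    proof (cases "x = y")
      case True then show ?thesis by simp
    next
      case False
      then obtain k where "x k \<noteq> y k" by auto
      then show ?thesis using False by (intro trans[OF prod_zero]) auto
    qed
  qed
  then show ?thesis by (simp add: vec_eq_iff tens_def mat_def)
qed

lemma pauli_tens: "pauli_string ps = tens (\<lambda>k. pauli_entry (ps k))"
  by (simp add: pauli_string_def tens_def)

definition wloc :: "pauli \<Rightarrow> bool \<Rightarrow> bool \<Rightarrow> complex" where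
  "wloc p i j = (case p of PX \<Rightarrow> hh * (if i \<and> j then -1 else 1)
                  | PY \<Rightarrow> hh * (if i then (if j then - \<i> else \<i>) else 1)
                  | _ \<Rightarrow> (if i = j then 1 else 0))"

definition zpart :: "pauli \<Rightarrow> pauli" where "zpart p = (if p = PI then PI else PZ)"

lemma sum_bool: "(\<Sum>l\<in>UNIV. f l) = f False + (f True :: complex)"
  by (simp add: UNIV_bool)

lemma hh_sq': "hh * hh * c = c / 2" "hh * (hh * c) = c / 2" using hh_sq by (simp_all add: mult.assoc[symmetric])

lemma wloc_unit1: "(\<Sum>l\<in>UNIV. wloc p i l * cnj (wloc p j l)) = (if i = j then 1 else 0)"
  by (cases p; cases i; cases j) (simp_all add: sum_bool wloc_def hh_sq hh_sq' algebra_simps)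

lemma wloc_unit2: "(\<Sum>l\<in>UNIV. cnj (wloc p l i) * wloc p l j) = (if i = j then 1 else 0)"
  by (cases p; cases i; cases j) (simp_all add: sum_bool wloc_def hh_sq hh_sq' algebra_simps)

lemma wloc_conj: "(\<Sum>m\<in>UNIV. (\<Sum>l\<in>UNIV. cnj (wloc p l i) * pauli_entry p l m) * wloc p m j) = pauli_entry (zpart p) i j"
  by (cases p; cases i; cases j) (simp_all add: sum_bool wloc_def zpart_def hh_sq hh_sq' algebra_simps)

definition Wmat :: "('n::finite \<Rightarrow> pauli) \<Rightarrow> 'n qmat" where
  "Wmat ps = tens (\<lambda>k. wloc (ps k))"

lemma Wmat_unitary: "Wmat ps \<in> unitary_group"
  unfolding unitary_group_def Wmat_def
  by (simp add: tens_adj tens_mult wloc_unit1 wloc_unit2 tens_id)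

lemma Wmat_conj: "adj (Wmat ps) ** pauli_string ps ** Wmat ps = pauli_string (\<lambda>k. zpart (ps k))"
  unfolding Wmat_def pauli_tens
  by (simp add: tens_adj tens_mult wloc_conj)

definition eps :: "('n::finite \<Rightarrow> pauli) \<Rightarrow> ('n \<Rightarrow> bool) \<Rightarrow> real" where
  "eps ps x = (\<Prod>k\<in>UNIV. if ps k = PI then 1 else if x k then -1 else 1)"

lemma zpart_entry: "pauli_string (\<lambda>k. zpart (ps k)) $ x $ y = (if x = y then complex_of_real (eps ps x) else 0)"
proof (cases "x = y")
  case True
  have h: "\<And>p a. pauli_entry (zpart p) a a = complex_of_real (if p = PI then 1 else if a then -1 else 1)"
    by (simp add: zpart_def)
  show ?thesis using True by (simp add: pauli_string_def eps_def of_real_prod h)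
next
  case False
  then obtain k where k: "x k \<noteq> y k" by auto
  have "pauli_string (\<lambda>k. zpart (ps k)) $ x $ y = (\<Prod>k\<in>UNIV. pauli_entry (zpart (ps k)) (x k) (y k))"
    by (simp add: pauli_string_def)
  also have "\<dots> = 0"
    by (rule prod_zero) (use k in \<open>auto simp: zpart_def intro!: bexI[of _ k]\<close>)
  finally have "pauli_string (\<lambda>k. zpart (ps k)) $ x $ y = 0" .
  then show ?thesis using False by simp
qed

lemma qf_diag: "qf (pauli_string (\<lambda>k. zpart (ps k))) v = complex_of_real (\<Sum>x\<in>UNIV. eps ps x * q x v)"
proof -
  have "qf (pauli_string (\<lambda>k. zpart (ps k))) v = (\<Sum>x\<in>UNIV. cnj (v$x) * complex_of_real (eps ps x) * v$x)"
    unfolding qf_def zpart_entry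
  proof (rule sum.cong[OF refl])
    fix x
    have h2: "\<And>y. cnj (v$x) * (if x = y then complex_of_real (eps ps x) else 0) * v$y
       = (cnj (v$x) * complex_of_real (eps ps x) * v$y) * of_bool (x = y)" by simp
    show "(\<Sum>y\<in>UNIV. cnj (v$x) * (if x = y then complex_of_real (eps ps x) else 0) * v$y)
       = cnj (v$x) * complex_of_real (eps ps x) * v$x" by (simp only: h2) simp
  qed
  also have "\<dots> = complex_of_real (\<Sum>x\<in>UNIV. eps ps x * q x v)"
    unfolding of_real_sum q_def
    by (rule sum.cong[OF refl]) (simp add: mult.commute mult.left_commute complex_mult_cnj cmod_power2 flip: of_real_power)
  finally show ?thesis .
qed

lemma qf_pauli_W: "qf (pauli_string ps) (Wmat ps *v v) = complex_of_real (\<Sum>x\<in>UNIV. eps ps x * q x v)"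
  by (simp add: qf_mult Wmat_conj qf_diag)

lemma eps_abs: "\<bar>eps ps x\<bar> = 1"
  unfolding eps_def abs_prod by (rule prod.neutral) auto

lemma eps_pow: "eps ps x ^ 2 = 1" "eps ps x ^ 3 = eps ps x" "eps ps x ^ 4 = 1"
proof -
  have 1: "eps ps x ^ 2 = 1" using eps_abs[of ps x] by (metis abs_power2 power2_eq_1_iff abs_1 abs_eq_iff power2_abs)
  show "eps ps x ^ 2 = 1" by (rule 1)
  show "eps ps x ^ 3 = eps ps x" using 1 by (simp add: power3_eq_cube power2_eq_square)
  show "eps ps x ^ 4 = 1" using 1 by (metis power_mult numeral_Bit0 one_power2 mult_2 power_add power2_eq_square)
qed

lemma sum_eps:
  fixes ps :: "'n::finite \<Rightarrow> pauli"
  shows "(\<Sum>x\<in>UNIV. eps ps x) = (if \<forall>k. ps k = PI then 2 ^ CARD('n::finite) else 0)"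
proof -
  have "(\<Sum>x\<in>UNIV. eps ps x) = (\<Prod>k\<in>(UNIV::'n set). \<Sum>b\<in>UNIV. (if ps k = PI then 1 else if b then -1 else 1::real))"
    unfolding eps_def by (rule sum_fun_prod)
  also have "\<dots> = (\<Prod>k\<in>(UNIV::'n set). (if ps k = PI then 2 else 0::real))"
    by (rule prod.cong[OF refl]) (simp add: UNIV_bool)
  also have "\<dots> = (if \<forall>k. ps k = PI then 2 ^ CARD('n) else 0)"
    by (auto simp: prod_zero)
  finally show ?thesis .
qed

lemma eps_I: "eps (\<lambda>_. PI) x = 1" by (simp add: eps_def)

lemma card_UNIV_pauli: "CARD(pauli) = 4"
  by (simp add: UNIV_pauli)

lemma card_vec_idx: "CARD('n::finite \<Rightarrow> bool) = 2 ^ CARD('n)"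
  by (simp add: card_fun)

lemma card_pstr: "CARD('n::finite \<Rightarrow> pauli) = 4 ^ CARD('n)"
  by (simp add: card_fun card_UNIV_pauli)

lemma four_pow: "(4::real) ^ n = (2 ^ n)^2"
proof -
  have "(4::real) ^ n = (2^2) ^ n" by simp
  also have "\<dots> = (2 ^ n)^2" by (metis power_mult mult.commute)
  finally show ?thesis .
qed

lemma cont_qf4: "continuous_on UNIV (\<lambda>w. Re (qf A w) ^ 4)"
  unfolding qf_def by (intro continuous_intros)

context haar_vec begin


lemma norm_c0: "c0 * ((2 ^ CARD('n)::real)^4 + 6 * (2 ^ CARD('n)::real)^3 + 11 * (2 ^ CARD('n)::real)^2 + 6 * (2 ^ CARD('n)::real)) = 1"
proof -
  have "Ev (\<lambda>w. (\<Sum>x\<in>UNIV. 1 * q x w) ^ 4) = Ev (\<lambda>w. 1)"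
  proof (rule E_cong)
    show "continuous_on UNIV (\<lambda>w. (\<Sum>x\<in>UNIV. 1 * q x w) ^ 4)" by (intro continuous_intros)
    show "continuous_on UNIV (\<lambda>w::'n qvec. 1::real)" by (intro continuous_intros)
    fix w :: "'n qvec" assume "nsq w = 1"
    then show "(\<Sum>x\<in>UNIV. 1 * q x w) ^ 4 = 1" by (simp add: nsq_def q_def)
  qed
  then have "1 = c0 * ((\<Sum>x\<in>(UNIV::('n\<Rightarrow>bool) set). 1)^4 + 6 * (\<Sum>x\<in>(UNIV::('n\<Rightarrow>bool) set). 1)^2 * (\<Sum>x\<in>(UNIV::('n\<Rightarrow>bool) set). 1^2)
     + 3 * (\<Sum>x\<in>(UNIV::('n\<Rightarrow>bool) set). 1^2)^2 + 8 * (\<Sum>x\<in>(UNIV::('n\<Rightarrow>bool) set). 1) * (\<Sum>x\<in>(UNIV::('n\<Rightarrow>bool) set). 1^3) + 6 * (\<Sum>x\<in>(UNIV::('n\<Rightarrow>bool) set). 1^4))"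
    using quartic[of "\<lambda>_. 1"] E_const by simp
  then show ?thesis by (simp add: card_vec_idx power2_eq_square power3_eq_cube power4_eq_xxxx algebra_simps)
qed

lemma pauli4:
  "Ev (\<lambda>w. Re (qf (pauli_string ps) w) ^ 4) =
     c0 * (if \<forall>k. ps k = PI then (2 ^ CARD('n)::real)^4 + 6 * (2 ^ CARD('n)::real)^3 + 11 * (2 ^ CARD('n)::real)^2 + 6 * (2 ^ CARD('n)::real) else 3 * (2 ^ CARD('n)::real)^2 + 6 * (2 ^ CARD('n)::real))"
proof -
  have "Ev (\<lambda>w. Re (qf (pauli_string ps) w) ^ 4) = Ev (\<lambda>w. Re (qf (pauli_string ps) (Wmat ps *v w)) ^ 4)"
    by (rule E_inv[OF Wmat_unitary cont_qf4, symmetric])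
  also have "\<dots> = Ev (\<lambda>w. (\<Sum>x\<in>UNIV. eps ps x * q x w) ^ 4)"
    by (simp add: qf_pauli_W)
  also have "\<dots> = c0 * ((\<Sum>x\<in>UNIV. eps ps x)^4 + 6 * (\<Sum>x\<in>UNIV. eps ps x)^2 * (\<Sum>x\<in>UNIV. eps ps x^2)
     + 3 * (\<Sum>x\<in>UNIV. eps ps x^2)^2 + 8 * (\<Sum>x\<in>UNIV. eps ps x) * (\<Sum>x\<in>UNIV. eps ps x^3) + 6 * (\<Sum>x\<in>UNIV. eps ps x^4))"
    by (rule quartic)
  also have "\<dots> = c0 * (if \<forall>k. ps k = PI then (2 ^ CARD('n)::real)^4 + 6 * (2 ^ CARD('n)::real)^3 + 11 * (2 ^ CARD('n)::real)^2 + 6 * (2 ^ CARD('n)::real) else 3 * (2 ^ CARD('n)::real)^2 + 6 * (2 ^ CARD('n)::real))"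
    by (simp only: eps_pow, simp add: sum_eps card_vec_idx power2_eq_square power3_eq_cube power4_eq_xxxx algebra_simps)
  finally show ?thesis .
qed

lemma pauli_total: "(\<Sum>ps\<in>UNIV. Ev (\<lambda>w. Re (qf (pauli_string ps) w) ^ 4)) = 4 * (2 ^ CARD('n)::real) / ((2 ^ CARD('n)::real) + 3)"
proof -
  define A where "A = (2 ^ CARD('n)::real)^4 + 6 * (2 ^ CARD('n)::real)^3 + 11 * (2 ^ CARD('n)::real)^2 + 6 * (2 ^ CARD('n)::real)"
  define B where "B = 3 * (2 ^ CARD('n)::real)^2 + 6 * (2 ^ CARD('n)::real)"
  have cond: "\<And>ps::'n\<Rightarrow>pauli. (\<forall>k. ps k = PI) \<longleftrightarrow> ps = (\<lambda>_. PI)" by auto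
  have "(\<Sum>ps\<in>UNIV. Ev (\<lambda>w. Re (qf (pauli_string ps) w) ^ 4))
      = (\<Sum>ps\<in>(UNIV::('n\<Rightarrow>pauli) set). c0 * B + (if ps = (\<lambda>_. PI) then c0 * (A - B) else 0))"
    by (rule sum.cong[OF refl]) (simp add: pauli4 cond A_def B_def algebra_simps)
  also have "\<dots> = real (CARD('n\<Rightarrow>pauli)) * (c0 * B) + c0 * (A - B)"
    by (simp add: sum.distrib)
  also have "\<dots> = (2 ^ CARD('n)::real)^2 * (c0 * B) + c0 * (A - B)"
    by (simp add: card_pstr four_pow)
  also have "\<dots> = 4 * (2 ^ CARD('n)::real) / ((2 ^ CARD('n)::real) + 3)"
  proof -
    define D where "D = (2 ^ CARD('n)::real)"
    have pos: "D > 0" by (simp add: D_def)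
    have A: "c0 * A = 1" using norm_c0 by (simp add: A_def)
    have Af: "A = D * (D + 1) * (D + 2) * (D + 3)"
      unfolding A_def D_def[symmetric] by (simp add: algebra_simps power2_eq_square power3_eq_cube power4_eq_xxxx)
    have Apos: "A > 0" using pos unfolding Af by simp
    have c0: "c0 = 1 / A" using A Apos by (simp add: field_simps)
    define K where "K = D * (D + 1) * (D + 2)"
    have Kpos: "K > 0" using pos by (simp add: K_def)
    have AK: "A = K * (D + 3)" by (simp add: Af K_def)
    have num: "D^2 * B + (A - B) = 4 * D * K"
      unfolding B_def D_def[symmetric] AK K_def by (simp add: algebra_simps power2_eq_square)
    have "D^2 * (c0 * B) + c0 * (A - B) = (D^2 * B + (A - B)) / A"
      unfolding c0 by (simp add: add_divide_distrib diff_divide_distrib)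
    also have "\<dots> = 4 * D * K / (K * (D + 3))" by (simp only: num, simp only: AK)
    also have "\<dots> = 4 * D / (D + 3)" using Kpos by simp
    finally have "D^2 * (c0 * B) + c0 * (A - B) = 4 * D / (D + 3)" .
    then show ?thesis by (simp add: D_def)
  qed
  finally show ?thesis .
qed

end

definition Xf :: "'n::finite qvec \<Rightarrow> real" where
  "Xf w = (1 / real (qdim TYPE('n))) * (\<Sum>s\<in>UNIV. Re (qf (pauli_string s) w) ^ 4)"

lemma qdim_eq: "real (qdim TYPE('n::finite)) = 2 ^ CARD('n)"
  by (simp add: qdim_def)

lemma Mlin_conj: "Mlin (U ** proj \<phi> ** adj U) = 1 - Xf (U *v \<phi>)"
  by (simp add: Mlin_def Xf_def pauli_exp_def conj_proj tr_proj)

lemma M2_conj: "M2 (U ** proj \<phi> ** adj U) = - log 2 (Xf (U *v \<phi>))"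
  by (simp add: M2_def Xf_def pauli_exp_def conj_proj tr_proj)

lemma cont_Xf: "continuous_on UNIV Xf"
  unfolding Xf_def qf_def by (intro continuous_intros)

lemma pauli_I: "pauli_string (\<lambda>_. PI) = (mat 1 :: 'n::finite qmat)"
proof -
  have "pauli_string (\<lambda>_. PI) = tens (\<lambda>k i j. if i = j then 1 else 0 :: complex)"
    unfolding pauli_tens by (rule arg_cong[where f=tens]) (auto simp: fun_eq_iff)
  then show ?thesis by (simp add: tens_id)
qed

lemma Xf_lower:
  assumes "nsq (w::'n::finite qvec) = 1"
  shows "Xf w \<ge> 1 / 2 ^ CARD('n)"
proof -
  have "Re (qf (pauli_string (\<lambda>_. PI)) w) ^ 4 = 1"
    using assms by (simp add: pauli_I qf_one)
  moreover have "Re (qf (pauli_string (\<lambda>_. PI)) w) ^ 4 \<le> (\<Sum>s\<in>UNIV. Re (qf (pauli_string s) w) ^ 4)"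
    by (rule member_le_sum) auto
  ultimately have "1 \<le> (\<Sum>s\<in>UNIV. Re (qf (pauli_string s) w) ^ 4)" by simp
  then show ?thesis unfolding Xf_def qdim_eq
    by (simp add: divide_simps)
qed

context haar_vec begin

lemma EX: "Ev Xf = 4 / (2 ^ CARD('n) + 3)"
proof -
  have "Ev Xf = (1 / 2 ^ CARD('n)) * (\<Sum>s\<in>UNIV. Ev (\<lambda>w. Re (qf (pauli_string s) w) ^ 4))"
    unfolding Xf_def qdim_eq
    by (subst E_cmult, subst E_sum) (auto intro: cont_qf4)
  also have "\<dots> = 4 / (2 ^ CARD('n) + 3)" by (simp add: pauli_total)
  finally show ?thesis .
qed

lemma Mlin_integrable: "integrable \<mu> (\<lambda>U. Mlin (U ** proj \<phi> ** adj U))"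
  unfolding Mlin_conj by (rule integrable_comp[OF _ phi]) (intro continuous_intros cont_Xf)

lemma Mlin_int: "(\<integral>U. Mlin (U ** proj \<phi> ** adj U) \<partial>\<mu>) = 1 - 4 / (2 ^ CARD('n) + 3)"
proof -
  have "(\<integral>U. Mlin (U ** proj \<phi> ** adj U) \<partial>\<mu>) = Ev (\<lambda>w. 1 - Xf w)"
    unfolding Mlin_conj Ev_def' ..
  also have "\<dots> = 1 - Ev Xf" by (subst E_diff) (auto intro: continuous_intros cont_Xf simp: E_const)
  finally show ?thesis by (simp add: EX)
qed

lemma M2_integrable: "integrable \<mu> (\<lambda>U. M2 (U ** proj \<phi> ** adj U))"
proof -
  obtain K where K: "\<And>w::'n qvec. nsq w = 1 \<Longrightarrow> \<bar>Xf w\<bar> \<le> K" using cont_bounded_sphere[OF cont_Xf] by blast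
  define B where "B = \<bar>log 2 (1 / 2 ^ CARD('n))\<bar> + \<bar>log 2 K\<bar>"
  have meas: "(\<lambda>U. - log 2 (Xf (U *v \<phi>))) \<in> borel_measurable \<mu>"
    using meas_comp[OF cont_Xf] by measurable
  have "AE U in \<mu>. norm (- log 2 (Xf (U *v \<phi>))) \<le> norm B"
  proof (rule AE_mp[OF AE_unitary], intro AE_I2 impI)
    fix U :: "'n qmat" assume "U \<in> unitary_group"
    then have n1: "nsq (U *v \<phi>) = 1" using phi by (simp add: nsq_unitary)
    have lo: "1 / 2 ^ CARD('n) \<le> Xf (U *v \<phi>)" by (rule Xf_lower[OF n1])
    have hi: "Xf (U *v \<phi>) \<le> K" using K[OF n1] by simp
    have p0: "0 < (1::real) / 2 ^ CARD('n)" by simp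
    have Xpos: "0 < Xf (U *v \<phi>)" using lo p0 by linarith
    have Kpos: "0 < K" using Xpos hi by linarith
    have "log 2 (1 / 2 ^ CARD('n)) \<le> log 2 (Xf (U *v \<phi>))"
      using lo p0 Xpos by (subst log_le_cancel_iff) auto
    moreover have "log 2 (Xf (U *v \<phi>)) \<le> log 2 K"
      using lo hi p0 Xpos Kpos by (subst log_le_cancel_iff) auto
    ultimately have "\<bar>- log 2 (Xf (U *v \<phi>))\<bar> \<le> B"
      unfolding B_def abs_le_iff
      using abs_ge_self[of "log 2 K"] abs_ge_minus_self[of "log 2 (1 / 2 ^ CARD('n))"] by linarith
    then show "norm (- log 2 (Xf (U *v \<phi>))) \<le> norm B" by simp
  qed
  moreover have "integrable \<mu> (\<lambda>_. B)"
    using prob_space.finite_measure[OF prob] by (simp add: finite_measure.integrable_const)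
  ultimately show ?thesis unfolding M2_conj
    using Bochner_Integration.integrable_bound[of \<mu> "\<lambda>_. B" "\<lambda>U. - log 2 (Xf (U *v \<phi>))"] meas by blast
qed

lemma log_tangent:
  assumes "x > 0" "m > 0"
  shows "- log 2 x \<ge> - log 2 m - (1 / (m * ln 2)) * (x - m)"
proof -
  have "ln (x / m) \<le> x / m - 1" using assms by (intro ln_le_minus_one) simp
  then have L: "ln x - ln m \<le> (x - m) / m" using assms by (simp add: ln_div diff_divide_distrib)
  have "log 2 x - log 2 m = (ln x - ln m) / ln 2" by (simp add: log_def diff_divide_distrib)
  also have "\<dots> \<le> ((x - m) / m) / ln 2" by (rule divide_right_mono[OF L]) simp
  also have "\<dots> = (1 / (m * ln 2)) * (x - m)" by simp
  finally show ?thesis by simp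
qed

lemma M2_int_ge: "(\<integral>U. M2 (U ** proj \<phi> ** adj U) \<partial>\<mu>) \<ge> - log 2 (4 / (2 ^ CARD('n) + 3))"
proof -
  define m where "m = 4 / ((2::real) ^ CARD('n) + 3)"
  have "(0::real) < 2 ^ CARD('n) + 3" by (intro add_pos_pos) simp_all
  then have mpos: "m > 0" by (simp add: m_def)
  define g :: "'n qvec \<Rightarrow> real" where "g = (\<lambda>w. - log 2 m - (1 / (m * ln 2)) * (Xf w - m))"
  have gc: "continuous_on UNIV g" unfolding g_def by (intro continuous_intros cont_Xf)
  have Eg: "Ev g = - log 2 m"
  proof -
    have "Ev g = - log 2 m - (1 / (m * ln 2)) * (Ev Xf - m)"
      unfolding g_def
      by (subst E_diff, (intro continuous_intros cont_Xf)+, subst E_cmult, subst E_diff, (intro continuous_intros cont_Xf)+)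
         (simp add: E_const)
    then show ?thesis by (simp add: EX m_def)
  qed
  have "(\<integral>U. g (U *v \<phi>) \<partial>\<mu>) \<le> (\<integral>U. M2 (U ** proj \<phi> ** adj U) \<partial>\<mu>)"
  proof (rule integral_mono_AE)
    show "integrable \<mu> (\<lambda>U. g (U *v \<phi>))" by (rule integrable_comp[OF gc phi])
    show "integrable \<mu> (\<lambda>U. M2 (U ** proj \<phi> ** adj U))" by (rule M2_integrable)
    show "AE U in \<mu>. g (U *v \<phi>) \<le> M2 (U ** proj \<phi> ** adj U)"
    proof (rule AE_mp[OF AE_unitary], intro AE_I2 impI)
      fix U :: "'n qmat" assume "U \<in> unitary_group"
      then have n1: "nsq (U *v \<phi>) = 1" using phi by (simp add: nsq_unitary)
      have "0 < 1 / (2::real) ^ CARD('n)" by simp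
      then have "Xf (U *v \<phi>) > 0" using Xf_lower[OF n1] by linarith
      then show "g (U *v \<phi>) \<le> M2 (U ** proj \<phi> ** adj U)"
        unfolding M2_conj g_def using log_tangent mpos by blast
    qed
  qed
  moreover have "(\<integral>U. g (U *v \<phi>) \<partial>\<mu>) = - log 2 m" using Eg by (simp add: Ev_def')
  ultimately show ?thesis by (simp add: m_def)
qed

end

lemma clifford_unitary: "C \<in> clifford \<Longrightarrow> C \<in> unitary_group"
  by (simp add: clifford_def)

lemma nsq_ket0: "nsq (ket0 :: 'n::finite qvec) = 1"
proof -
  have "nsq (ket0 :: 'n qvec) = (\<Sum>x::'n\<Rightarrow>bool\<in>UNIV. if x = (\<lambda>_. False) then 1 else 0)"
    unfolding nsq_def by (rule sum.cong[OF refl]) (simp add: ket0_def)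
  then show ?thesis by simp
qed

lemma STAB_proj:
  assumes "\<rho> \<in> STAB"
  shows "\<exists>\<phi>. nsq \<phi> = 1 \<and> \<rho> = proj \<phi>"
proof -
  obtain C where C: "C \<in> clifford" and \<rho>: "\<rho> = proj (C *v ket0)" using assms unfolding STAB_def by blast
  have "nsq (C *v ket0) = 1" using nsq_unitary[OF clifford_unitary[OF C]] nsq_ket0 by simp
  then show ?thesis using \<rho> by blast
qed

lemma adj_one: "adj (mat 1) = (mat 1 :: 'n::finite qmat)"
  by (simp add: vec_eq_iff adj_def mat_def)

lemma cscale_one: "cscale 1 A = A"
  by (simp add: vec_eq_iff cscale_def)

lemma one_clifford: "mat 1 \<in> clifford"
  unfolding clifford_def unitary_group_def
  by (auto simp: adj_one cscale_one intro!: bexI[of _ 1])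

lemma STAB_ne: "STAB \<noteq> {}"
  unfolding STAB_def using one_clifford by blast

definition Zs :: "('n::finite \<Rightarrow> pauli) set" where "Zs = PiE UNIV (\<lambda>_. {PI, PZ})"

definition Phi :: "(('n::finite \<Rightarrow> pauli) \<Rightarrow> 'n qmat) \<Rightarrow> 'n qmat" where
  "Phi F = (\<chi> i j. (1 / of_real (2 ^ CARD('n))) * (\<Sum>z\<in>Zs. F z $ i $ j))"

lemma sum_IZ: "(\<Sum>\<sigma>\<in>{PI, PZ}. pauli_entry \<sigma> a b) = (if a = b \<and> \<not> a then 2 else 0)"
  by (cases a; cases b) auto

lemma proj_ket0: "proj (ket0 :: 'n::finite qvec) = Phi pauli_string"
proof -
  have "\<And>i j::'n\<Rightarrow>bool. (\<Sum>z\<in>Zs. pauli_string z $ i $ j) = (\<Prod>k\<in>UNIV. (if i k = j k \<and> \<not> i k then 2 else 0))"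
  proof -
    fix i j :: "'n \<Rightarrow> bool"
    have "(\<Sum>z\<in>Zs. pauli_string z $ i $ j) = (\<Sum>z\<in>Zs. \<Prod>k\<in>UNIV. pauli_entry (z k) (i k) (j k))"
      by (simp add: pauli_string_def)
    also have "\<dots> = (\<Prod>k\<in>UNIV. \<Sum>\<sigma>\<in>{PI, PZ}. pauli_entry \<sigma> (i k) (j k))"
      unfolding Zs_def by (rule prod_sum_PiE[symmetric]) auto
    also have "\<dots> = (\<Prod>k\<in>UNIV. (if i k = j k \<and> \<not> i k then 2 else 0))"
      by (simp add: sum_IZ)
    finally show "(\<Sum>z\<in>Zs. pauli_string z $ i $ j) = (\<Prod>k\<in>UNIV. (if i k = j k \<and> \<not> i k then 2 else 0))" .
  qed
  moreover have "\<And>i j::'n\<Rightarrow>bool. (\<Prod>k\<in>UNIV. (if i k = j k \<and> \<not> i k then 2 else 0::complex))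
      = (if i = (\<lambda>_. False) \<and> j = (\<lambda>_. False) then 2 ^ CARD('n) else 0)"
  proof -
    fix i j :: "'n \<Rightarrow> bool"
    show "(\<Prod>k\<in>UNIV. (if i k = j k \<and> \<not> i k then 2 else 0::complex))
      = (if i = (\<lambda>_. False) \<and> j = (\<lambda>_. False) then 2 ^ CARD('n) else 0)"
    proof (cases "i = (\<lambda>_. False) \<and> j = (\<lambda>_. False)")
      case True then show ?thesis by simp
    next
      case False
      then obtain k where "\<not> (i k = j k \<and> \<not> i k)" by (auto simp: fun_eq_iff)
      then show ?thesis using False by (intro trans[OF prod_zero]) auto
    qed
  qed
  ultimately show ?thesis
    by (simp add: vec_eq_iff proj_def ket0_def Phi_def)
qed

lemma conj_Phi: "C ** Phi F ** adj C = Phi (\<lambda>z. C ** F z ** adj C)"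
proof -
  have "\<And>i j. (C ** Phi F ** adj C) $ i $ j = (Phi (\<lambda>z. C ** F z ** adj C)) $ i $ j"
  proof -
    fix i j
    let ?c = "1 / complex_of_real (2 ^ CARD('a))"
    have "(C ** Phi F ** adj C) $ i $ j = (\<Sum>l\<in>UNIV. \<Sum>k\<in>UNIV. \<Sum>z\<in>Zs. ?c * (C $ i $ k * F z $ k $ l * adj C $ l $ j))"
      by (simp add: matrix_matrix_mult_def Phi_def sum_distrib_left sum_distrib_right mult_ac)
    also have "\<dots> = (\<Sum>l\<in>UNIV. \<Sum>z\<in>Zs. \<Sum>k\<in>UNIV. ?c * (C $ i $ k * F z $ k $ l * adj C $ l $ j))"
      by (rule sum.cong[OF refl], rule sum.swap)
    also have "\<dots> = (\<Sum>z\<in>Zs. \<Sum>l\<in>UNIV. \<Sum>k\<in>UNIV. ?c * (C $ i $ k * F z $ k $ l * adj C $ l $ j))"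
      by (rule sum.swap)
    also have "\<dots> = (Phi (\<lambda>z. C ** F z ** adj C)) $ i $ j"
      by (simp add: matrix_matrix_mult_def Phi_def sum_distrib_left sum_distrib_right mult_ac)
    finally show "(C ** Phi F ** adj C) $ i $ j = (Phi (\<lambda>z. C ** F z ** adj C)) $ i $ j" .
  qed
  then show ?thesis by (simp add: vec_eq_iff)
qed

lemma Phi_restrict: "Phi F = Phi (restrict F Zs)"
  unfolding Phi_def by (rule arg_cong[where f=vec_lambda], rule ext, rule arg_cong[where f=vec_lambda], rule ext) simp

definition FS :: "'n::finite qmat set" where
  "FS = (\<lambda>(c, s). cscale c (pauli_string s)) ` ({1, -1, \<i>, - \<i>} \<times> UNIV)"

lemma finite_FS: "finite FS"
  unfolding FS_def by simp

lemma STAB_sub: "(STAB :: 'n::finite qmat set) \<subseteq> Phi ` (PiE Zs (\<lambda>_. FS))"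
proof
  fix \<rho> :: "'n qmat" assume "\<rho> \<in> STAB"
  then obtain C where C: "C \<in> clifford" and \<rho>: "\<rho> = proj (C *v ket0)" unfolding STAB_def by blast
  have "\<rho> = C ** proj ket0 ** adj C" by (simp add: \<rho> conj_proj)
  also have "\<dots> = Phi (\<lambda>z. C ** pauli_string z ** adj C)" by (simp add: proj_ket0 conj_Phi)
  also have "\<dots> = Phi (restrict (\<lambda>z. C ** pauli_string z ** adj C) Zs)" by (rule Phi_restrict)
  finally have 1: "\<rho> = Phi (restrict (\<lambda>z. C ** pauli_string z ** adj C) Zs)" .
  have "\<And>z::'n\<Rightarrow>pauli. C ** pauli_string z ** adj C \<in> FS"
  proof -
    fix z :: "'n \<Rightarrow> pauli"
    have "pauli_string z \<in> pauli_group_set" by (simp add: pauli_group_set_def)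
    then obtain c Q where c: "c \<in> {1, -1, \<i>, - \<i>}" and Q: "Q \<in> pauli_group_set"
      and eq: "C ** pauli_string z ** adj C = cscale c Q"
      using C unfolding clifford_def by blast
    obtain s where "Q = pauli_string s" using Q by (auto simp: pauli_group_set_def)
    then show "C ** pauli_string z ** adj C \<in> FS" unfolding FS_def eq using c by force
  qed
  then have "restrict (\<lambda>z. C ** pauli_string z ** adj C) Zs \<in> PiE Zs (\<lambda>_. FS)" by auto
  then show "\<rho> \<in> Phi ` (PiE Zs (\<lambda>_. FS))" using 1 by blast
qed

lemma STAB_finite: "finite STAB"
  by (rule finite_subset[OF STAB_sub]) (intro finite_imageI finite_PiE finite_FS, simp_all add: Zs_def)

theorem mainTheorem9:
  fixes \<mu> :: "'n::finite qmat measure"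
  assumes "haar_unitary \<mu>"
  defines "d \<equiv> real (qdim TYPE('n))"
  shows "(\<integral>U. NSlin U \<partial>\<mu>) = 1 - 4 / (d + 3)
    \<and> (\<integral>U. NS2 U \<partial>\<mu>) \<ge> - log 2 (1 - (\<integral>U. NSlin U \<partial>\<mu>))
    \<and> - log 2 (1 - (\<integral>U. NSlin U \<partial>\<mu>)) = log 2 ((d + 3) / 4)"
proof -
  interpret haar_ctx \<mu> by unfold_locales (rule assms(1))
  have dd: "d = 2 ^ CARD('n)" by (simp add: d_def qdim_eq)
  define m where "m = 1 - 4 / (d + 3)"
  define lb where "lb = - log 2 (4 / (d + 3))"
  have fin: "finite (STAB :: 'n qmat set)" by (rule STAB_finite)
  have cpos: "card (STAB :: 'n qmat set) > 0" using fin STAB_ne by (simp add: card_gt_0_iff)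
  have each: "\<And>\<rho>. \<rho> \<in> (STAB :: 'n qmat set) \<Longrightarrow>
      integrable \<mu> (\<lambda>U. Mlin (U ** \<rho> ** adj U)) \<and> (\<integral>U. Mlin (U ** \<rho> ** adj U) \<partial>\<mu>) = m
      \<and> integrable \<mu> (\<lambda>U. M2 (U ** \<rho> ** adj U)) \<and> (\<integral>U. M2 (U ** \<rho> ** adj U) \<partial>\<mu>) \<ge> lb"
  proof -
    fix \<rho> :: "'n qmat" assume "\<rho> \<in> STAB"
    then obtain \<phi> where \<phi>: "nsq \<phi> = 1" and \<rho>: "\<rho> = proj \<phi>" using STAB_proj by blast
    interpret V: haar_vec \<mu> \<phi> by unfold_locales (rule \<phi>)
    show "integrable \<mu> (\<lambda>U. Mlin (U ** \<rho> ** adj U)) \<and> (\<integral>U. Mlin (U ** \<rho> ** adj U) \<partial>\<mu>) = m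
      \<and> integrable \<mu> (\<lambda>U. M2 (U ** \<rho> ** adj U)) \<and> (\<integral>U. M2 (U ** \<rho> ** adj U) \<partial>\<mu>) \<ge> lb"
      unfolding \<rho> m_def lb_def dd
      using V.Mlin_integrable V.Mlin_int V.M2_integrable V.M2_int_ge by blast
  qed
  have I1: "(\<integral>U. NSlin U \<partial>\<mu>) = m"
  proof -
    have "(\<integral>U. NSlin U \<partial>\<mu>) = (\<integral>U. (\<Sum>\<rho>\<in>STAB. Mlin (U ** \<rho> ** adj U)) \<partial>\<mu>) / real (card (STAB :: 'n qmat set))"
      unfolding NSlin_def by simp
    also have "(\<integral>U. (\<Sum>\<rho>\<in>STAB. Mlin (U ** \<rho> ** adj U)) \<partial>\<mu>) = (\<Sum>\<rho>\<in>(STAB :: 'n qmat set). \<integral>U. Mlin (U ** \<rho> ** adj U) \<partial>\<mu>)"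
      by (rule Bochner_Integration.integral_sum) (use each in blast)
    also have "\<dots> = (\<Sum>\<rho>\<in>(STAB :: 'n qmat set). m)"
      by (rule sum.cong[OF refl]) (use each in blast)
    finally show ?thesis using cpos by simp
  qed
  have I2: "(\<integral>U. NS2 U \<partial>\<mu>) \<ge> lb"
  proof -
    have "(\<integral>U. NS2 U \<partial>\<mu>) = (\<integral>U. (\<Sum>\<rho>\<in>STAB. M2 (U ** \<rho> ** adj U)) \<partial>\<mu>) / real (card (STAB :: 'n qmat set))"
      unfolding NS2_def by simp
    also have "(\<integral>U. (\<Sum>\<rho>\<in>STAB. M2 (U ** \<rho> ** adj U)) \<partial>\<mu>) = (\<Sum>\<rho>\<in>(STAB :: 'n qmat set). \<integral>U. M2 (U ** \<rho> ** adj U) \<partial>\<mu>)"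
      by (rule Bochner_Integration.integral_sum) (use each in blast)
    finally have eq: "(\<integral>U. NS2 U \<partial>\<mu>) = (\<Sum>\<rho>\<in>(STAB :: 'n qmat set). \<integral>U. M2 (U ** \<rho> ** adj U) \<partial>\<mu>) / real (card (STAB :: 'n qmat set))" .
    have "(\<Sum>\<rho>\<in>(STAB :: 'n qmat set). lb) \<le> (\<Sum>\<rho>\<in>(STAB :: 'n qmat set). \<integral>U. M2 (U ** \<rho> ** adj U) \<partial>\<mu>)"
      by (rule sum_mono) (use each in blast)
    then have "real (card (STAB :: 'n qmat set)) * lb \<le> (\<Sum>\<rho>\<in>(STAB :: 'n qmat set). \<integral>U. M2 (U ** \<rho> ** adj U) \<partial>\<mu>)"
      by simp
    then show ?thesis unfolding eq using cpos by (simp add: field_simps)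
  qed
  have dpos: "d + 3 > 0" unfolding dd by (intro add_pos_pos) simp_all
  have L3: "- log 2 (4 / (d + 3)) = log 2 ((d + 3) / 4)"
  proof -
    have e: "(d + 3) / 4 = inverse (4 / (d + 3))" by simp
    show ?thesis by (subst e) (rule log_inverse[symmetric])
  qed
  have m1: "1 - m = 4 / (d + 3)" by (simp add: m_def)
  show ?thesis
    using I1 I2 L3 m1 unfolding lb_def m_def by simp
qed

end
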